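(* Let $p$ be a prime. For $F=\begin{pmatrix}\alpha&\beta\\ \gamma&\delta\end{pmatrix}\in SL(2,\mathbb{Z}_p)$ and $u=(u_1,u_2)\in\mathbb{Z}_p^2$ let $C_{(F|u)}=D_uU_F$ be the Clifford unitary on $\mathbb{C}^p$ described in the context, and let $$|J^F_u\rangle=(I\otimes C_{(F|u)})\frac{1}{\sqrt p}\sum_{j=0}^{p-1}|jj\rangle\in\mathbb{C}^p\otimes\mathbb{C}^p .$$ For each $F$, $\mathcal{B}_F=\{|J^F_u\rangle: u\in\mathbb{Z}_p^2\}$ is an orthonormal basis of $\mathbb{C}^p\otimes\mathbb{C}^p$. Then: (a) If $F_1,F_2\in SL(2,\mathbb{Z}_p)$ satisfy $\mathrm{Tr}(F_1^{-1}F_2)\neq 2\pmod p$, then the bases $\mathcal{B}_{F_1}$ and $\mathcal{B}_{F_2}$ are mutually unbiased, i.e. $|\langle J^{F_1}_u|J^{F_2}_v\rangle|=1/p$ for all $u,v\in\mathbb{Z}_p^2$. (b) If $\mathcal{F}=\{F_i\}\subset SL(2,\mathbb{Z}_p)$ has $|\mathcal{F}|=p^2-1$ and pairwise satisfies $\mathrm{Tr}(F_i^{-1}F_j)\neq 2\pmod p$ for $i\neq j$, then (i) $\{\mathcal{B}_{F}:F\in\mathcal{F}\}$ is a complete bipartite entangled stabilizer MUB, i.e. a set of $p^2-1$ pairwise mutually unbiased orthonormal bases of $\mathbb{C}^p\otimes\mathbb{C}^p$ consisting of maximally entangled stabilizer states, and (ii) $\mathcal{F}$ is a maximum clique of the Cayley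 graph $\Gamma(G,T)$ with $G=SL(2,\mathbb{Z}_p)$ and $T=\{F\in SL(2,\mathbb{Z}_p):\mathrm{Tr}(F)\neq 2\pmod p\}$.
   Context: Let $\omega=e^{2\pi i/p}$, $\tau=e^{(p+1)\pi i/p}$. On $\mathbb{C}^p$ with basis $\{|j\rangle\}_{j\in\mathbb{Z}_p}$ define $X|j\rangle=|j+1\rangle$, $Z|j\rangle=\omega^j|j\rangle$, and displacement operators $D_u=\tau^{u_1u_2}X^{u_1}Z^{u_2}$. For $F=\begin{pmatrix}\alpha&\beta\\ \gamma&\delta\end{pmatrix}\in SL(2,\mathbb{Z}_p)$, define $U_F=\frac{1}{\sqrt p}\sum_{j,k=0}^{p-1}\tau^{\beta^{-1}(\alpha k^2-2jk+\delta j^2)}|j\rangle\langle k|$ if $\beta\neq0$, and $U_F=\sum_{k=0}^{p-1}\tau^{\alpha\gamma k^2}|\alpha k\rangle\langle k|$ if $\beta=0$ (inverses taken mod $p$); this is Appleby's unitary implementing the symplectic action, $U_FD_vU_F^\dagger=D_{Fv}$, and $C_{(F|u)}=D_uU_F$. Two orthonormal bases $\{|a\rangle\},\{|b\rangle\}$ of a $d$-dimensional space are mutually unbiased if $|\langle a|b\rangle|=1/\sqrt d$ for all $a,b$. The Cayley graph $\Gamma(G,T)$ has vertex set $G$, with $g_1\sim g_2$ iff $g_1^{-1}g_2\in T$. A clique is a set of pairwise adjacent vertices; a maximum clique is one of largest possible size. *)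

theory Defs
  imports "HOL-Analysis.Analysis" "HOL-Algebra.Group"
begin

text \<open>Elements of Z_p are represented by their canonical representatives in {..<p} (type nat).
  Operators on C^p are matrices nat => nat => complex, only entries with indices < p matter
  (entries outside are 0).  Exponents of tau are computed as integers from these representatives.\<close>

definition omega :: "nat \<Rightarrow> complex" where
  "omega p = cis (2 * pi / real p)"

definition tau :: "nat \<Rightarrow> complex" where
  "tau p = cis ((real p + 1) * pi / real p)"

definition zinv :: "nat \<Rightarrow> nat \<Rightarrow> nat" where
  "zinv p b = (SOME x. x < p \<and> (b * x) mod p = 1)"

type_synonym cmat = "nat \<Rightarrow> nat \<Rightarrow> complex"

definition idm :: "nat \<Rightarrow> cmat" where
  "idm p j k = (if j = k \<and> j < p then 1 else 0)"

definition mmult :: "nat \<Rightarrow> cmat \<Rightarrow> cmat \<Rightarrow> cmat" where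
  "mmult p A B j k = (\<Sum>m<p. A j m * B m k)"

primrec mpow :: "nat \<Rightarrow> cmat \<Rightarrow> nat \<Rightarrow> cmat" where
  "mpow p A 0 = idm p"
| "mpow p A (Suc n) = mmult p A (mpow p A n)"

definition Xop :: "nat \<Rightarrow> cmat" where
  "Xop p j k = (if j < p \<and> k < p \<and> j = (k + 1) mod p then 1 else 0)"

definition Zop :: "nat \<Rightarrow> cmat" where
  "Zop p j k = (if j = k \<and> j < p then omega p ^ j else 0)"

definition Dop :: "nat \<Rightarrow> nat \<times> nat \<Rightarrow> cmat" where
  "Dop p u j k = tau p ^ (fst u * snd u) * mmult p (mpow p (Xop p) (fst u)) (mpow p (Zop p) (snd u)) j k"

text \<open>A 2x2 matrix (alpha, beta, gamma, delta) over Z_p.\<close>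
type_synonym mat2 = "nat \<times> nat \<times> nat \<times> nat"

definition Uop :: "nat \<Rightarrow> mat2 \<Rightarrow> cmat" where
  "Uop p F j k = (case F of (\<alpha>, \<beta>, \<gamma>, \<delta>) \<Rightarrow>
     if j < p \<and> k < p then
       (if \<beta> \<noteq> 0 then
          (1 / complex_of_real (sqrt (real p))) *
            tau p powi (int (zinv p \<beta>) * (int \<alpha> * int k ^ 2 - 2 * int j * int k + int \<delta> * int j ^ 2))
        else (if j = (\<alpha> * k) mod p then tau p ^ (\<alpha> * \<gamma> * k ^ 2) else 0))
     else 0)"

definition Cliff :: "nat \<Rightarrow> mat2 \<Rightarrow> nat \<times> nat \<Rightarrow> cmat" where
  "Cliff p F u = mmult p (Dop p u) (Uop p F)"

text \<open>A vector of C^p (x) C^p is a function on index pairs (a,b), |a b> = |a> (x) |b>;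
  the space is the set of such functions supported on {..<p} x {..<p}.\<close>
type_synonym cvec2 = "nat \<times> nat \<Rightarrow> complex"

definition V2 :: "nat \<Rightarrow> cvec2 set" where
  "V2 p = {\<psi>. \<forall>a b. (p \<le> a \<or> p \<le> b) \<longrightarrow> \<psi> (a, b) = 0}"

definition inner2 :: "nat \<Rightarrow> cvec2 \<Rightarrow> cvec2 \<Rightarrow> complex" where
  "inner2 p \<psi> \<phi> = (\<Sum>a<p. \<Sum>b<p. cnj (\<psi> (a, b)) * \<phi> (a, b))"

definition kron_apply :: "nat \<Rightarrow> cmat \<Rightarrow> cmat \<Rightarrow> cvec2 \<Rightarrow> cvec2" where
  "kron_apply p A B \<psi> = (\<lambda>(a, b). \<Sum>a'<p. \<Sum>b'<p. A a a' * B b b' * \<psi> (a', b'))"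

definition bell :: "nat \<Rightarrow> cvec2" where
  "bell p = (\<lambda>(a, b). if a = b \<and> a < p then 1 / complex_of_real (sqrt (real p)) else 0)"

definition Jstate :: "nat \<Rightarrow> mat2 \<Rightarrow> nat \<times> nat \<Rightarrow> cvec2" where
  "Jstate p F u = kron_apply p (idm p) (Cliff p F u) (bell p)"

definition Zp2 :: "nat \<Rightarrow> (nat \<times> nat) set" where
  "Zp2 p = {..<p} \<times> {..<p}"

definition basisF :: "nat \<Rightarrow> mat2 \<Rightarrow> cvec2 set" where
  "basisF p F = Jstate p F ` Zp2 p"

definition is_onb :: "nat \<Rightarrow> cvec2 set \<Rightarrow> bool" where
  "is_onb p B \<longleftrightarrow> finite B \<and> B \<subseteq> V2 p \<and>
     (\<forall>x\<in>B. \<forall>y\<in>B. inner2 p x y = (if x = y then 1 else 0)) \<and>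
     (\<forall>\<psi>\<in>V2 p. \<psi> = (\<lambda>ab. \<Sum>b\<in>B. inner2 p b \<psi> * b ab))"

definition mub :: "nat \<Rightarrow> cvec2 set \<Rightarrow> cvec2 set \<Rightarrow> bool" where
  "mub p B1 B2 \<longleftrightarrow> is_onb p B1 \<and> is_onb p B2 \<and>
     (\<forall>a\<in>B1. \<forall>b\<in>B2. cmod (inner2 p a b) = 1 / sqrt (real (p ^ 2)))"

text \<open>Maximally entangled: unit vector whose reduced state on the first factor is I/p.\<close>
definition max_ent :: "nat \<Rightarrow> cvec2 \<Rightarrow> bool" where
  "max_ent p \<psi> \<longleftrightarrow> \<psi> \<in> V2 p \<and> inner2 p \<psi> \<psi> = 1 \<and>
     (\<forall>a<p. \<forall>a'<p. (\<Sum>b<p. \<psi> (a, b) * cnj (\<psi> (a', b))) = (if a = a' then 1 / of_nat p else 0))"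

text \<open>Two-qudit stabilizer states: nonzero common eigenvectors of all D_u (x) D_v with (u,v)
  ranging over a Lagrangian subspace of Z_p^4 (w.r.t. the standard symplectic form).\<close>
definition symp4 :: "nat \<Rightarrow> (nat \<times> nat) \<times> (nat \<times> nat) \<Rightarrow> (nat \<times> nat) \<times> (nat \<times> nat) \<Rightarrow> int" where
  "symp4 p w w' = (case w of ((u1, u2), (v1, v2)) \<Rightarrow> case w' of ((u1', u2'), (v1', v2')) \<Rightarrow>
     (int u1 * int u2' - int u2 * int u1' + int v1 * int v2' - int v2 * int v1') mod int p)"

definition add4 :: "nat \<Rightarrow> (nat \<times> nat) \<times> (nat \<times> nat) \<Rightarrow> (nat \<times> nat) \<times> (nat \<times> nat) \<Rightarrow> (nat \<times> nat) \<times> (nat \<times> nat)" where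
  "add4 p w w' = (case w of ((u1, u2), (v1, v2)) \<Rightarrow> case w' of ((u1', u2'), (v1', v2')) \<Rightarrow>
     (((u1 + u1') mod p, (u2 + u2') mod p), ((v1 + v1') mod p, (v2 + v2') mod p)))"

definition lagrangian :: "nat \<Rightarrow> ((nat \<times> nat) \<times> (nat \<times> nat)) set \<Rightarrow> bool" where
  "lagrangian p L \<longleftrightarrow> L \<subseteq> Zp2 p \<times> Zp2 p \<and> ((0, 0), (0, 0)) \<in> L \<and>
     (\<forall>w\<in>L. \<forall>w'\<in>L. add4 p w w' \<in> L) \<and> card L = p ^ 2 \<and>
     (\<forall>w\<in>L. \<forall>w'\<in>L. symp4 p w w' = 0)"

definition stab_state :: "nat \<Rightarrow> cvec2 \<Rightarrow> bool" where
  "stab_state p \<psi> \<longleftrightarrow> \<psi> \<in> V2 p \<and> \<psi> \<noteq> (\<lambda>_. 0) \<and>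
     (\<exists>L. lagrangian p L \<and>
        (\<forall>w\<in>L. \<exists>c::complex. kron_apply p (Dop p (fst w)) (Dop p (snd w)) \<psi> = (\<lambda>ab. c * \<psi> ab)))"

definition ent_stab_mub :: "nat \<Rightarrow> nat \<Rightarrow> cvec2 set set \<Rightarrow> bool" where
  "ent_stab_mub p n S \<longleftrightarrow> finite S \<and> card S = n \<and>
     (\<forall>B\<in>S. is_onb p B \<and> (\<forall>\<psi>\<in>B. max_ent p \<psi> \<and> stab_state p \<psi>)) \<and>
     (\<forall>B1\<in>S. \<forall>B2\<in>S. B1 \<noteq> B2 \<longrightarrow> mub p B1 B2)"

definition SL2 :: "nat \<Rightarrow> mat2 set" where
  "SL2 p = {(a, b, c, d). a < p \<and> b < p \<and> c < p \<and> d < p \<and>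
              (int a * int d - int b * int c) mod int p = 1}"

definition m2mul :: "nat \<Rightarrow> mat2 \<Rightarrow> mat2 \<Rightarrow> mat2" where
  "m2mul p F G = (case F of (a, b, c, d) \<Rightarrow> case G of (a', b', c', d') \<Rightarrow>
     ((a * a' + b * c') mod p, (a * b' + b * d') mod p, (c * a' + d * c') mod p, (c * b' + d * d') mod p))"

definition m2inv :: "nat \<Rightarrow> mat2 \<Rightarrow> mat2" where
  "m2inv p F = (case F of (a, b, c, d) \<Rightarrow> (d, (p - b) mod p, (p - c) mod p, a))"

definition m2tr :: "nat \<Rightarrow> mat2 \<Rightarrow> nat" where
  "m2tr p F = (case F of (a, b, c, d) \<Rightarrow> (a + d) mod p)"

definition SL2_group :: "nat \<Rightarrow> mat2 monoid" where
  "SL2_group p = \<lparr>carrier = SL2 p, mult = m2mul p, one = (1, 0, 0, 1)\<rparr>"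

definition cayley_adj :: "('a, 'b) monoid_scheme \<Rightarrow> 'a set \<Rightarrow> 'a \<Rightarrow> 'a \<Rightarrow> bool" where
  "cayley_adj G T g1 g2 \<longleftrightarrow> g1 \<in> carrier G \<and> g2 \<in> carrier G \<and> inv\<^bsub>G\<^esub> g1 \<otimes>\<^bsub>G\<^esub> g2 \<in> T"

definition is_clique :: "('a, 'b) monoid_scheme \<Rightarrow> 'a set \<Rightarrow> 'a set \<Rightarrow> bool" where
  "is_clique G T K \<longleftrightarrow> K \<subseteq> carrier G \<and> (\<forall>x\<in>K. \<forall>y\<in>K. x \<noteq> y \<longrightarrow> cayley_adj G T x y)"

definition is_max_clique :: "('a, 'b) monoid_scheme \<Rightarrow> 'a set \<Rightarrow> 'a set \<Rightarrow> bool" where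
  "is_max_clique G T K \<longleftrightarrow> is_clique G T K \<and> (\<forall>K'. is_clique G T K' \<longrightarrow> card K' \<le> card K)"

end

theory Submission imports Defs "HOL-Number_Theory.Cong" begin

definition th :: "nat \<Rightarrow> real" where "th p = (real p + 1) * pi / real p"
definition E :: "nat \<Rightarrow> int \<Rightarrow> complex" where "E p n = cis (of_int n * th p)"

lemma tau_cis: "tau p = cis (th p)"
  by (simp add: tau_def th_def)

lemma tau_powi: "tau p powi n = E p n"
  by (simp add: tau_cis E_def cis_power_int)

lemma tau_pow: "tau p ^ n = E p (int n)"
  by (metis power_int_of_nat tau_powi)

lemma E_add: "E p (a + b) = E p a * E p b"
  by (simp add: E_def cis_mult distrib_right)

lemma E_0[simp]: "E p 0 = 1" by (simp add: E_def)

lemma E_cnj: "cnj (E p n) = E p (- n)"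
  by (simp add: E_def cis_cnj)

lemma norm_E[simp]: "cmod (E p n) = 1"
  by (simp add: E_def)

lemma E_nz[simp]: "E p n \<noteq> 0"
  by (metis norm_E norm_zero zero_neq_one)

lemma E_diff: "E p (a - b) = E p a * cnj (E p b)"
  by (metis E_add E_cnj diff_conv_add_uminus)

lemma E_cnj_l: "cnj (E p x) * E p y = E p (y - x)"
  by (simp add: E_diff mult.commute)

lemma E_cnj_mult: "cnj (E p n) * E p n = 1"
  by (metis E_add E_0 E_cnj add.left_inverse)

lemma E_mult_nat: "E p (m * int k) = E p m ^ k"
proof -
  have "E p m ^ k = cis (real k * (of_int m * th p))" unfolding E_def by (rule Complex.DeMoivre)
  thus ?thesis by (simp add: E_def mult.commute mult.left_commute)
qed

lemma cis_add_2pi_int: "cis (x + 2 * pi * of_int k) = cis x"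
proof -
  have "cis (2 * pi * of_int k) = 1" by (rule cis_multiple_2pi) simp
  thus ?thesis by (simp add: cis_mult[symmetric])
qed

lemma cis_add_2pi_Ints: "x \<in> \<int> \<Longrightarrow> cis (y + 2 * pi * x) = cis y"
  by (metis Ints_cases cis_add_2pi_int)

lemma E_period1: "p > 0 \<Longrightarrow> E p (n + 2 * int p * k) = E p n"
proof -
  assume p: "p > 0"
  have "of_int (n + 2 * int p * k) * th p = of_int n * th p + 2 * pi * (of_int k * (real p + 1))"
    using p by (simp add: th_def field_simps)
  moreover have "of_int k * (real p + 1) \<in> \<int>" by (intro Ints_mult Ints_add) auto
  ultimately show ?thesis by (simp add: E_def cis_add_2pi_Ints)
qed

lemma E_period2: "p > 0 \<Longrightarrow> E p (n + int p * int p * k) = E p n"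
proof -
  assume p: "p > 0"
  have "2 dvd (p * (p + 1))" by simp
  then obtain m where m: "p * (p + 1) = 2 * m" unfolding dvd_def by blast
  hence m': "real p * (real p + 1) = 2 * real m"
    by (metis of_nat_1 of_nat_add of_nat_mult of_nat_numeral)
  have "of_int (n + int p * int p * k) * th p = of_int n * th p + (of_int k * pi) * (real p * (real p + 1))"
    using p by (simp add: th_def field_simps)
  also have "\<dots> = of_int n * th p + 2 * pi * (of_int k * real m)"
    by (simp add: m')
  finally have eq: "of_int (n + int p * int p * k) * th p = of_int n * th p + 2 * pi * (of_int k * real m)" .
  have "of_int k * real m \<in> \<int>" by (intro Ints_mult) auto
  show ?thesis unfolding E_def eq by (rule cis_add_2pi_Ints) fact
qed

lemma omega_pow: "p > 0 \<Longrightarrow> omega p ^ n = E p (2 * int n)"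
proof -
  assume p: "p > 0"
  have "omega p ^ n = cis (real n * (2 * pi / real p))" unfolding omega_def by (rule Complex.DeMoivre)
  also have "real n * (2 * pi / real p) + 2 * pi * of_int (int n) = of_int (2 * int n) * th p"
    using p by (simp add: th_def field_simps)
  hence "cis (real n * (2 * pi / real p)) = E p (2 * int n)"
    by (metis E_def cis_add_2pi_int)
  finally show ?thesis .
qed

lemma E_two_eq_1: "p > 0 \<Longrightarrow> E p (2 * c) = 1 \<longleftrightarrow> int p dvd c"
proof
  assume p: "p > 0"
  have eq: "of_int (2 * c) * th p = 2 * pi * of_int c / real p + 2 * pi * of_int c"
    using p by (simp add: th_def field_simps)
  {
    assume "E p (2 * c) = 1"
    moreover have "E p (2 * c) = cis (2 * pi * of_int c / real p)" unfolding E_def eq by (rule cis_add_2pi_int)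
    ultimately have "cis (2 * pi * of_int c / real p) = 1" by simp
    hence "cos (2 * pi * of_int c / real p) = 1" by (metis cis.sel(1) one_complex.sel(1))
    then obtain n :: int where n: "2 * pi * of_int c / real p = of_int n * 2 * pi"
      using cos_one_2pi_int by blast
    hence "of_int c = real p * of_int n" using p by (simp add: field_simps)
    hence "c = int p * n" by (metis of_int_eq_iff of_int_mult of_int_of_nat_eq)
    thus "int p dvd c" by simp
  }
  {
    assume "int p dvd c"
    then obtain k where "c = int p * k" by blast
    thus "E p (2 * c) = 1" using E_period1[OF p, of 0 k] by (simp add: mult.assoc)
  }
qed

lemma geom_E: "p > 0 \<Longrightarrow> (\<Sum>k<p. E p (2 * c * int k)) = (if int p dvd c then of_nat p else 0)"
proof -
  assume p: "p > 0"
  have s: "(\<Sum>k<p. E p (2 * c * int k)) = (\<Sum>k<p. E p (2 * c) ^ k)"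
    by (simp add: E_mult_nat)
  show ?thesis
  proof (cases "int p dvd c")
    case True
    thus ?thesis using E_two_eq_1[OF p, of c] by (simp add: s)
  next
    case False
    hence ne: "E p (2 * c) \<noteq> 1" using E_two_eq_1[OF p] by simp
    have "E p (2 * c) ^ p = E p (2 * (int p * c))" by (simp add: E_mult_nat[symmetric] algebra_simps)
    also have "\<dots> = 1" using E_two_eq_1[OF p] by simp
    finally have "E p (2 * c) ^ p = 1" .
    thus ?thesis using False ne by (simp add: s sum_gp_strict)
  qed
qed


lemma sum_single: "(\<Sum>m<(p::nat). (if m = c then f m else 0)) = (if c < p then f c else (0::'a::comm_monoid_add))"
  by (subst sum.delta) auto

lemma sum_single_r: "(\<Sum>m<(p::nat). f m * (if c = m then 1 else 0)) = (if c < p then f c else (0::complex))"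
proof -
  have "(\<Sum>m<(p::nat). f m * (if c = m then 1 else 0)) = (\<Sum>m<p. if m = c then f m else 0)"
    by (intro sum.cong refl) auto
  thus ?thesis by (simp add: sum_single)
qed

context fixes p :: nat assumes pr: "prime p"
begin

lemma p_pos: "p > 0" using pr prime_gt_0_nat by blast
lemma p_ge2: "p \<ge> 2" using pr prime_ge_2_nat by blast

lemma mpowX: "mpow p (Xop p) n j k = (if j < p \<and> k < p \<and> j = (k + n) mod p then 1 else 0)"
proof (induction n arbitrary: j)
  case 0
  show ?case by (auto simp: idm_def)
next
  case (Suc n)
  have "mpow p (Xop p) (Suc n) j k = (\<Sum>m<p. Xop p j m * mpow p (Xop p) n m k)"
    by (simp add: mmult_def)
  also have "\<dots> = (\<Sum>m<p. (if m = (k + n) mod p then (if k < p then Xop p j m else 0) else 0))"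
    by (intro sum.cong refl) (auto simp: Suc.IH)
  also have "\<dots> = (if k < p then Xop p j ((k + n) mod p) else 0)"
    using p_pos by (simp add: sum_single)
  also have "\<dots> = (if j < p \<and> k < p \<and> j = (k + Suc n) mod p then 1 else 0)"
    using p_pos by (auto simp: Xop_def mod_Suc_eq)
  finally show ?case .
qed

lemma mpowZ: "mpow p (Zop p) n j k = (if j = k \<and> j < p then omega p ^ (n * j) else 0)"
proof (induction n arbitrary: j)
  case 0
  show ?case by (auto simp: idm_def)
next
  case (Suc n)
  have "mpow p (Zop p) (Suc n) j k = (\<Sum>m<p. Zop p j m * mpow p (Zop p) n m k)"
    by (simp add: mmult_def)
  also have "\<dots> = (\<Sum>m<p. (if m = j then (if j = k \<and> j < p then omega p ^ j * omega p ^ (n * j) else 0) else 0))"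
    by (intro sum.cong refl) (auto simp: Suc.IH Zop_def)
  also have "\<dots> = (if j = k \<and> j < p then omega p ^ (Suc n * j) else 0)"
    by (simp add: sum_single power_add)
  finally show ?case .
qed

lemma Dop_entry: "Dop p u j k = (if j < p \<and> k < p \<and> j = (k + fst u) mod p
    then E p (int (fst u * snd u)) * E p (2 * int (snd u * k)) else 0)"
proof -
  have "mmult p (mpow p (Xop p) (fst u)) (mpow p (Zop p) (snd u)) j k
     = (\<Sum>m<p. (if m = k then (if j < p \<and> k < p \<and> j = (k + fst u) mod p then omega p ^ (snd u * k) else 0) else 0))"
    unfolding mmult_def by (intro sum.cong refl) (auto simp: mpowX mpowZ)
  also have "\<dots> = (if j < p \<and> k < p \<and> j = (k + fst u) mod p then E p (2 * int (snd u * k)) else 0)"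
    by (simp add: sum_single omega_pow[OF p_pos])
  finally show ?thesis by (simp add: Dop_def tau_pow)
qed


lemma eq_mod_iff: "j < p \<Longrightarrow> (j = x mod p) \<longleftrightarrow> (int p dvd (int j - int x))"
proof -
  assume j: "j < p"
  have "(j = x mod p) \<longleftrightarrow> (j mod p = x mod p)" using j by simp
  also have "\<dots> \<longleftrightarrow> (int j mod int p = int x mod int p)"
    by (metis of_nat_eq_iff zmod_int)
  also have "\<dots> \<longleftrightarrow> (int p dvd (int j - int x))" by (rule mod_eq_dvd_iff)
  finally show ?thesis .
qed

lemma mod_dvd: "int p dvd (int (n mod p) - int n)"
proof -
  have "int p dvd (int n - int n mod int p)" by simp
  thus ?thesis by (simp add: zmod_int dvd_diff_commute)
qed

lemma idx_shift: "m < p \<Longrightarrow> j < p \<Longrightarrow> u < p \<Longrightarrow> (j = (m + u) mod p) = (m = (j + p - u) mod p)"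
proof -
  assume a: "m < p" "j < p" "u < p"
  have "int (j + p - u) = int j + int p - int u" using a by simp
  thus ?thesis using a by (simp add: eq_mod_iff) (rule iffI; algebra)
qed

lemma zinv: "0 < b \<Longrightarrow> b < p \<Longrightarrow> zinv p b < p \<and> (b * zinv p b) mod p = 1"
proof -
  assume b: "0 < b" "b < p"
  have "\<not> p dvd b" using b by (simp add: nat_dvd_not_less)
  hence "coprime p b" using pr prime_imp_coprime by blast
  hence "coprime b p" by (simp add: coprime_commute)
  then obtain x where "x < p" "[b * x = Suc 0] (mod p)"
    using coprime_iff_invertible'_nat[of p b] p_pos by auto
  hence ex: "\<exists>x. x < p \<and> (b * x) mod p = 1" using p_ge2 by (auto simp: cong_def)
  show ?thesis unfolding zinv_def by (rule someI_ex[OF ex])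
qed

lemma zinv_dvd: "0 < b \<Longrightarrow> b < p \<Longrightarrow> int p dvd (int b * int (zinv p b) - 1)"
proof -
  assume b: "0 < b" "b < p"
  hence "(b * zinv p b) mod p = 1" using zinv by blast
  hence "1 = (b * zinv p b) mod p" by simp
  hence "int p dvd (1 - int (b * zinv p b))" using eq_mod_iff p_ge2 by fastforce
  thus ?thesis by (simp add: dvd_diff_commute)
qed

lemma Uop_nz: "\<beta> \<noteq> 0 \<Longrightarrow> j < p \<Longrightarrow> k < p \<Longrightarrow> Uop p (\<alpha>, \<beta>, \<gamma>, \<delta>) j k =
   (1 / complex_of_real (sqrt (real p))) * E p (int (zinv p \<beta>) * (int \<alpha> * int k ^ 2 - 2 * int j * int k + int \<delta> * int j ^ 2))"
  by (simp add: Uop_def tau_powi)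

lemma Uop_z: "j < p \<Longrightarrow> k < p \<Longrightarrow> Uop p (\<alpha>, 0, \<gamma>, \<delta>) j k =
   (if j = (\<alpha> * k) mod p then E p (int (\<alpha> * \<gamma> * k ^ 2)) else 0)"
  by (simp add: Uop_def tau_pow)

lemma Uop_out: "\<not> (j < p \<and> k < p) \<Longrightarrow> Uop p F j k = 0"
  by (auto simp: Uop_def split: prod.splits)

lemma Cliff_entry: "j < p \<Longrightarrow> k < p \<Longrightarrow> fst u < p \<Longrightarrow> Cliff p F u j k =
   E p (int (fst u * snd u)) * E p (2 * int (snd u * ((j + p - fst u) mod p))) * Uop p F ((j + p - fst u) mod p) k"
proof -
  assume a: "j < p" "k < p" "fst u < p"
  have "Cliff p F u j k = (\<Sum>m<p. Dop p u j m * Uop p F m k)" by (simp add: Cliff_def mmult_def)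
  also have "\<dots> = (\<Sum>m<p. if m = (j + p - fst u) mod p then E p (int (fst u * snd u)) * E p (2 * int (snd u * m)) * Uop p F m k else 0)"
    by (intro sum.cong refl) (use a in \<open>auto simp: Dop_entry idx_shift\<close>)
  also have "\<dots> = E p (int (fst u * snd u)) * E p (2 * int (snd u * ((j + p - fst u) mod p))) * Uop p F ((j + p - fst u) mod p) k"
    using p_pos by (simp add: sum_single)
  finally show ?thesis .
qed

lemma Cliff_out: "\<not> j < p \<Longrightarrow> Cliff p F u j k = 0"
  by (simp add: Cliff_def mmult_def Dop_entry)

lemma Jstate_entry: "Jstate p F u (a, b) = (if a < p then Cliff p F u b a / complex_of_real (sqrt (real p)) else 0)"
proof -
  have inner: "(\<Sum>b'<p. Cliff p F u b b' * bell p (a', b')) = (if a' < p then Cliff p F u b a' / complex_of_real (sqrt (real p)) else 0)" for a'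
  proof -
    have "(\<Sum>b'<p. Cliff p F u b b' * bell p (a', b')) = (\<Sum>b'<p. if b' = a' then (if a' < p then Cliff p F u b a' / complex_of_real (sqrt (real p)) else 0) else 0)"
      by (intro sum.cong refl) (auto simp: bell_def)
    thus ?thesis by (simp add: sum_single)
  qed
  have "Jstate p F u (a, b) = (\<Sum>a'<p. idm p a a' * (\<Sum>b'<p. Cliff p F u b b' * bell p (a', b')))"
    by (simp add: Jstate_def kron_apply_def sum_distrib_left mult.assoc)
  also have "\<dots> = (\<Sum>a'<p. if a' = a then (if a < p then Cliff p F u b a / complex_of_real (sqrt (real p)) else 0) else 0)"
    by (intro sum.cong refl) (auto simp: idm_def inner)
  also have "\<dots> = (if a < p then Cliff p F u b a / complex_of_real (sqrt (real p)) else 0)"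
    by (simp add: sum_single)
  finally show ?thesis .
qed


lemma sqrt_p_sq: "complex_of_real (sqrt (real p)) * complex_of_real (sqrt (real p)) = of_nat p"
proof -
  have "complex_of_real (sqrt (real p)) * complex_of_real (sqrt (real p)) = complex_of_real (sqrt (real p) * sqrt (real p))"
    by (simp only: of_real_mult)
  also have "\<dots> = of_nat p" by simp
  finally show ?thesis .
qed

lemma inner_J: "inner2 p (Jstate p F1 u) (Jstate p F2 v) = (\<Sum>a<p. \<Sum>b<p. cnj (Cliff p F1 u b a) * Cliff p F2 v b a) / of_nat p"
proof -
  have "inner2 p (Jstate p F1 u) (Jstate p F2 v) = (\<Sum>a<p. \<Sum>b<p. cnj (Cliff p F1 u b a) * Cliff p F2 v b a / of_nat p)"
    unfolding inner2_def
  proof (intro sum.cong refl)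
    fix a b assume "a \<in> {..<p}"
    hence "a < p" by simp
    have "cnj (x / complex_of_real (sqrt (real p))) * (y / complex_of_real (sqrt (real p)))
       = cnj x * y / (complex_of_real (sqrt (real p)) * complex_of_real (sqrt (real p)))" for x y
      by simp
    thus "cnj (Jstate p F1 u (a, b)) * Jstate p F2 v (a, b) = cnj (Cliff p F1 u b a) * Cliff p F2 v b a / of_nat p"
      using \<open>a < p\<close> by (simp only: Jstate_entry if_True sqrt_p_sq)
  qed
  thus ?thesis by (simp add: sum_divide_distrib)
qed

lemma E_shape: "int p dvd (m' - m) \<Longrightarrow> E p (c * m' ^ 2 + 2 * t * m' + r) = E p (c * m ^ 2 + 2 * t * m + r)"
proof -
  assume "int p dvd (m' - m)"
  then obtain k where "m' - m = int p * k" unfolding dvd_def by blast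
  hence k: "m' = m + int p * k" by simp
  have "c * m' ^ 2 + 2 * t * m' + r = (c * m ^ 2 + 2 * t * m + r + 2 * int p * (c * m * k + t * k)) + int p * int p * (c * k ^ 2)"
    unfolding k by (simp add: power2_eq_square algebra_simps)
  hence "E p (c * m' ^ 2 + 2 * t * m' + r) = E p ((c * m ^ 2 + 2 * t * m + r + 2 * int p * (c * m * k + t * k)) + int p * int p * (c * k ^ 2))"
    by (rule arg_cong)
  also have "\<dots> = E p (c * m ^ 2 + 2 * t * m + r + 2 * int p * (c * m * k + t * k))"
    by (rule E_period2[OF p_pos])
  also have "\<dots> = E p (c * m ^ 2 + 2 * t * m + r)"
    by (rule E_period1[OF p_pos])
  finally show ?thesis .
qed

lemma E_shape': "int p dvd (m' - m) \<Longrightarrow> (\<forall>x. f x = c * x ^ 2 + 2 * t * x + r) \<Longrightarrow> E p (f m') = E p (f m)"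
  using E_shape by simp

lemma small_dvd: "k < p \<Longrightarrow> k' < p \<Longrightarrow> int p dvd (int k - int k') \<Longrightarrow> k = k'"
proof -
  assume a: "k < p" "k' < p" "int p dvd (int k - int k')"
  have "int k mod int p = int k' mod int p" using a(3) by (simp only: mod_eq_dvd_iff)
  hence "int (k mod p) = int (k' mod p)" by (simp only: zmod_int)
  thus "k = k'" using a by simp
qed

lemma perm_sum: "(\<And>k. k < p \<Longrightarrow> f k < p) \<Longrightarrow> inj_on f {..<p} \<Longrightarrow> (\<Sum>k<p. g (f k)) = (\<Sum>k<p. g k)"
proof -
  assume a: "\<And>k. k < p \<Longrightarrow> f k < p" "inj_on f {..<p}"
  have "f ` {..<p} = {..<p}" using a by (intro endo_inj_surj) auto
  thus ?thesis using sum.reindex[OF a(2), of g] by simp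
qed

lemma shift_inj: "inj_on (\<lambda>k. (k + s) mod p) {..<p}"
proof (rule inj_onI)
  fix k k' assume k: "k \<in> {..<p}" "k' \<in> {..<p}" and eq: "(k + s) mod p = (k' + s) mod p"
  have "int ((k + s) mod p) = int ((k' + s) mod p)" using eq by simp
  hence "int (k + s) mod int p = int (k' + s) mod int p" by (simp only: zmod_int)
  hence "int p dvd (int (k + s) - int (k' + s))" by (simp only: mod_eq_dvd_iff)
  thus "k = k'" using k small_dvd by simp
qed

lemma shift_sum: "(\<Sum>k<p. g ((k + s) mod p)) = (\<Sum>k<p. g k)"
  using perm_sum[of "\<lambda>k. (k + s) mod p", OF _ shift_inj] p_pos by simp

lemma geom_E': "(\<Sum>k<p. E p (2 * c * int k)) = (if int p dvd c then of_nat p else 0)"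
  using geom_E[OF p_pos] .

lemma prime_int: "prime (int p)" using pr by simp

lemma dvd_mult_small: "\<not> int p dvd A \<Longrightarrow> z < p \<Longrightarrow> int p dvd (A * int z) \<Longrightarrow> z = 0"
proof -
  assume a: "\<not> int p dvd A" "z < p" "int p dvd (A * int z)"
  hence "int p dvd int z" using prime_int prime_dvd_mult_iff by blast
  thus "z = 0" using a(2) small_dvd[of z 0] p_pos by simp
qed

lemma cmod_sq: "cmod S ^ 2 = Re (S * cnj S)"
  by (simp add: complex_mult_cnj cmod_def)

lemma gauss1:
  assumes nd: "\<not> int p dvd A"
  shows "cmod (\<Sum>a<p. E p (A * int a ^ 2 + 2 * D * int a)) = sqrt (real p)"
proof -
  define \<Phi> where "\<Phi> = (\<lambda>a::int. A * a ^ 2 + 2 * D * a)"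
  define S where "S = (\<Sum>a<p. E p (\<Phi> (int a)))"
  have inner: "(\<Sum>x<p. E p (\<Phi> (int x) - \<Phi> (int y))) = (\<Sum>z<p. E p (\<Phi> (int z)) * E p (2 * (A * int z) * int y))" if y: "y < p" for y
  proof -
    have "(\<Sum>x<p. E p (\<Phi> (int x) - \<Phi> (int y))) = (\<Sum>z<p. E p (\<Phi> (int ((z + y) mod p)) - \<Phi> (int y)))"
      using shift_sum[of "\<lambda>x. E p (\<Phi> (int x) - \<Phi> (int y))" y] by simp
    also have "\<dots> = (\<Sum>z<p. E p (\<Phi> (int z + int y) - \<Phi> (int y)))"
    proof (intro sum.cong refl)
      fix z
      have d: "int p dvd (int ((z + y) mod p) - (int z + int y))" using mod_dvd[of "z + y"] by simp
      show "E p (\<Phi> (int ((z + y) mod p)) - \<Phi> (int y)) = E p (\<Phi> (int z + int y) - \<Phi> (int y))"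
        by (rule E_shape'[OF d, of _ A D "- \<Phi> (int y)"]) (simp add: \<Phi>_def algebra_simps)
    qed
    also have "\<dots> = (\<Sum>z<p. E p (\<Phi> (int z)) * E p (2 * (A * int z) * int y))"
      by (intro sum.cong refl) (simp add: \<Phi>_def E_add[symmetric] power2_eq_square algebra_simps)
    finally show ?thesis .
  qed
  have "S * cnj S = (\<Sum>y<p. \<Sum>x<p. E p (\<Phi> (int x) - \<Phi> (int y)))"
    unfolding S_def by (simp add: sum_distrib_left sum_distrib_right E_diff)
  also have "\<dots> = (\<Sum>y<p. \<Sum>z<p. E p (\<Phi> (int z)) * E p (2 * (A * int z) * int y))"
    by (rule sum.cong[OF refl]) (simp add: inner)
  also have "\<dots> = (\<Sum>z<p. E p (\<Phi> (int z)) * (\<Sum>y<p. E p (2 * (A * int z) * int y)))"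
    by (subst sum.swap) (simp add: sum_distrib_left)
  also have "\<dots> = (\<Sum>z<p. if z = 0 then of_nat p else 0)"
  proof (intro sum.cong refl)
    fix z assume "z \<in> {..<p}"
    thus "E p (\<Phi> (int z)) * (\<Sum>y<p. E p (2 * (A * int z) * int y)) = (if z = 0 then of_nat p else 0)"
      using dvd_mult_small[OF nd] by (auto simp: geom_E' \<Phi>_def)
  qed
  also have "\<dots> = of_nat p" using p_pos by (simp add: sum_single)
  finally have "cmod S ^ 2 = real p" by (simp add: cmod_sq)
  hence "sqrt (real p) = cmod S" using real_sqrt_unique norm_ge_zero by blast
  thus ?thesis unfolding S_def \<Phi>_def by simp
qed


lemma swap4: "(\<Sum>a<p. \<Sum>b<p. \<Sum>c<p. \<Sum>d<p. f a b c d) = (\<Sum>c<p. \<Sum>d<p. \<Sum>a<p. \<Sum>b<p. (f a b c d :: complex))"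
proof -
  have "(\<Sum>a<p. \<Sum>b<p. \<Sum>c<p. \<Sum>d<p. f a b c d) = (\<Sum>a<p. \<Sum>c<p. \<Sum>b<p. \<Sum>d<p. f a b c d)"
    by (rule sum.cong[OF refl], rule sum.swap)
  also have "\<dots> = (\<Sum>a<p. \<Sum>c<p. \<Sum>d<p. \<Sum>b<p. f a b c d)"
    by (rule sum.cong[OF refl], rule sum.cong[OF refl], rule sum.swap)
  also have "\<dots> = (\<Sum>c<p. \<Sum>a<p. \<Sum>d<p. \<Sum>b<p. f a b c d)"
    by (rule sum.swap)
  also have "\<dots> = (\<Sum>c<p. \<Sum>d<p. \<Sum>a<p. \<Sum>b<p. f a b c d)"
    by (rule sum.cong[OF refl], rule sum.swap)
  finally show ?thesis .
qed

lemma sum_prod3: "(\<Sum>y1<p. \<Sum>y2<p. X * (G y1 * H y2)) = X * ((\<Sum>y1<p. G y1) * (\<Sum>y2<p. (H y2::complex)))"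
proof -
  have "X * ((\<Sum>y1<p. G y1) * (\<Sum>y2<p. H y2)) = X * (\<Sum>y1<p. G y1 * (\<Sum>y2<p. H y2))"
    by (simp only: sum_distrib_right)
  also have "\<dots> = (\<Sum>y1<p. \<Sum>y2<p. X * (G y1 * H y2))"
    by (simp only: sum_distrib_left)
  finally show ?thesis by simp
qed

lemma sum_single2: "(\<Sum>z1<p. \<Sum>z2<p. if z1 = 0 then (if z2 = 0 then c else 0) else 0) = (c::complex)"
proof -
  have h: "(\<Sum>z2<p. if z1 = 0 then (if z2 = 0 then c else 0) else 0) = (if z1 = 0 then c else 0)" for z1
    using p_pos by (cases "z1 = 0") (simp_all add: sum_single)
  have "(\<Sum>z1<p. \<Sum>z2<p. if z1 = 0 then (if z2 = 0 then c else 0) else 0) = (\<Sum>z1<p. if z1 = 0 then c else 0)"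
    by (rule sum.cong[OF refl]) (rule h)
  also have "\<dots> = c" using p_pos by (simp add: sum_single)
  finally show ?thesis .
qed

lemma gauss2:
  assumes nd: "\<not> int p dvd (A * C - B ^ 2)"
  shows "cmod (\<Sum>a<p. \<Sum>b<p. E p (A * int a ^ 2 + C * int b ^ 2 + 2 * (B * int a * int b + D * int a + G * int b) + K)) = real p"
proof -
  define \<Phi> where "\<Phi> = (\<lambda>a b::int. A * a ^ 2 + C * b ^ 2 + 2 * (B * a * b + D * a + G * b) + K)"
  define \<Psi> where "\<Psi> = (\<lambda>a b::int. \<Phi> a b - K)"
  define S where "S = (\<Sum>a<p. \<Sum>b<p. E p (\<Phi> (int a) (int b)))"
  have inner: "(\<Sum>x1<p. \<Sum>x2<p. E p (\<Phi> (int x1) (int x2) - \<Phi> (int y1) (int y2))) =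
     (\<Sum>z1<p. \<Sum>z2<p. E p (\<Psi> (int z1) (int z2)) * (E p (2 * (A * int z1 + B * int z2) * int y1) * E p (2 * (B * int z1 + C * int z2) * int y2)))"
    for y1 y2
  proof -
    have "(\<Sum>x1<p. \<Sum>x2<p. E p (\<Phi> (int x1) (int x2) - \<Phi> (int y1) (int y2)))
      = (\<Sum>z1<p. \<Sum>x2<p. E p (\<Phi> (int ((z1 + y1) mod p)) (int x2) - \<Phi> (int y1) (int y2)))"
      using shift_sum[of "\<lambda>x1. \<Sum>x2<p. E p (\<Phi> (int x1) (int x2) - \<Phi> (int y1) (int y2))" y1] by simp
    also have "\<dots> = (\<Sum>z1<p. \<Sum>z2<p. E p (\<Phi> (int ((z1 + y1) mod p)) (int ((z2 + y2) mod p)) - \<Phi> (int y1) (int y2)))"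
      by (rule sum.cong[OF refl]) (rule shift_sum[symmetric])
    also have "\<dots> = (\<Sum>z1<p. \<Sum>z2<p. E p (\<Phi> (int z1 + int y1) (int z2 + int y2) - \<Phi> (int y1) (int y2)))"
    proof (intro sum.cong refl)
      fix z1 z2
      have d1: "int p dvd (int ((z1 + y1) mod p) - (int z1 + int y1))" using mod_dvd[of "z1 + y1"] by simp
      have d2: "int p dvd (int ((z2 + y2) mod p) - (int z2 + int y2))" using mod_dvd[of "z2 + y2"] by simp
      have "E p (\<Phi> (int ((z1 + y1) mod p)) (int ((z2 + y2) mod p)) - \<Phi> (int y1) (int y2))
          = E p (\<Phi> (int z1 + int y1) (int ((z2 + y2) mod p)) - \<Phi> (int y1) (int y2))"
        by (rule E_shape'[OF d1, of _ A "B * int ((z2 + y2) mod p) + D" "C * int ((z2 + y2) mod p) ^ 2 + 2 * G * int ((z2 + y2) mod p) + K - \<Phi> (int y1) (int y2)"])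
          (simp add: \<Phi>_def algebra_simps)
      also have "\<dots> = E p (\<Phi> (int z1 + int y1) (int z2 + int y2) - \<Phi> (int y1) (int y2))"
        by (rule E_shape'[OF d2, of _ C "B * (int z1 + int y1) + G" "A * (int z1 + int y1) ^ 2 + 2 * D * (int z1 + int y1) + K - \<Phi> (int y1) (int y2)"])
          (simp add: \<Phi>_def algebra_simps)
      finally show "E p (\<Phi> (int ((z1 + y1) mod p)) (int ((z2 + y2) mod p)) - \<Phi> (int y1) (int y2))
          = E p (\<Phi> (int z1 + int y1) (int z2 + int y2) - \<Phi> (int y1) (int y2))" .
    qed
    also have "\<dots> = (\<Sum>z1<p. \<Sum>z2<p. E p (\<Psi> (int z1) (int z2)) * (E p (2 * (A * int z1 + B * int z2) * int y1) * E p (2 * (B * int z1 + C * int z2) * int y2)))"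
      by (intro sum.cong refl) (simp add: \<Psi>_def \<Phi>_def E_add[symmetric] power2_eq_square algebra_simps)
    finally show ?thesis .
  qed
  have "S * cnj S = (\<Sum>y1<p. \<Sum>y2<p. \<Sum>x1<p. \<Sum>x2<p. E p (\<Phi> (int x1) (int x2) - \<Phi> (int y1) (int y2)))"
    unfolding S_def by (simp add: sum_distrib_left sum_distrib_right E_diff)
  also have "\<dots> = (\<Sum>y1<p. \<Sum>y2<p. \<Sum>z1<p. \<Sum>z2<p. E p (\<Psi> (int z1) (int z2)) * (E p (2 * (A * int z1 + B * int z2) * int y1) * E p (2 * (B * int z1 + C * int z2) * int y2)))"
    by (rule sum.cong[OF refl], rule sum.cong[OF refl], rule inner)
  also have "\<dots> = (\<Sum>z1<p. \<Sum>z2<p. \<Sum>y1<p. \<Sum>y2<p. E p (\<Psi> (int z1) (int z2)) * (E p (2 * (A * int z1 + B * int z2) * int y1) * E p (2 * (B * int z1 + C * int z2) * int y2)))"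
    by (rule swap4)
  also have "\<dots> = (\<Sum>z1<p. \<Sum>z2<p. E p (\<Psi> (int z1) (int z2)) * ((\<Sum>y1<p. E p (2 * (A * int z1 + B * int z2) * int y1)) * (\<Sum>y2<p. E p (2 * (B * int z1 + C * int z2) * int y2))))"
    by (rule sum.cong[OF refl], rule sum.cong[OF refl]) (rule sum_prod3)
  also have "\<dots> = (\<Sum>z1<p. \<Sum>z2<p. if z1 = 0 then (if z2 = 0 then of_nat p * of_nat p else 0) else 0)"
  proof (intro sum.cong refl)
    fix z1 z2 assume z: "z1 \<in> {..<p}" "z2 \<in> {..<p}"
    have key: "z1 = 0 \<and> z2 = 0" if h1: "int p dvd (A * int z1 + B * int z2)" and h2: "int p dvd (B * int z1 + C * int z2)"
    proof -
      have "int p dvd ((A * C - B ^ 2) * int z1)" using h1 h2 by algebra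
      hence "int p dvd int z1" using nd prime_int prime_dvd_mult_iff by blast
      moreover have "int p dvd ((A * C - B ^ 2) * int z2)" using h1 h2 by algebra
      hence "int p dvd int z2" using nd prime_int prime_dvd_mult_iff by blast
      ultimately show ?thesis using z small_dvd[of z1 0] small_dvd[of z2 0] p_pos by simp
    qed
    show "E p (\<Psi> (int z1) (int z2)) * ((\<Sum>y1<p. E p (2 * (A * int z1 + B * int z2) * int y1)) * (\<Sum>y2<p. E p (2 * (B * int z1 + C * int z2) * int y2)))
      = (if z1 = 0 then (if z2 = 0 then of_nat p * of_nat p else 0) else 0)"
      using key by (simp only: geom_E') (auto simp: \<Psi>_def \<Phi>_def)
  qed
  also have "\<dots> = of_nat p * of_nat p" by (rule sum_single2)
  finally have SS: "S * cnj S = of_nat p * of_nat p" .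
  have "cmod S ^ 2 = Re (S * cnj S)" by (rule cmod_sq)
  also have "\<dots> = real p ^ 2" by (simp add: SS power2_eq_square)
  finally have "cmod S ^ 2 = real p ^ 2" .
  hence "cmod S = real p" using power2_eq_imp_eq norm_ge_zero of_nat_0_le_iff by blast
  thus ?thesis unfolding S_def \<Phi>_def by simp
qed


lemma SL2_D: "(al, be, ga, de) \<in> SL2 p \<Longrightarrow> al < p \<and> be < p \<and> ga < p \<and> de < p \<and> int p dvd (int al * int de - int be * int ga - 1)"
proof -
  assume "(al, be, ga, de) \<in> SL2 p"
  hence a: "al < p" "be < p" "ga < p" "de < p" "(int al * int de - int be * int ga) mod int p = 1"
    by (auto simp: SL2_def)
  have "1 mod int p = 1" using p_ge2 by simp
  hence "(int al * int de - int be * int ga) mod int p = 1 mod int p" using a(5) by simp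
  hence "int p dvd (int al * int de - int be * int ga - 1)" by (simp only: mod_eq_dvd_iff)
  thus ?thesis using a by simp
qed

lemma not_dvd_of_unit: "int p dvd (x * y - 1) \<Longrightarrow> \<not> int p dvd x"
proof
  assume a: "int p dvd (x * y - 1)" "int p dvd x"
  hence "int p dvd 1" by algebra
  thus False using p_ge2 by simp
qed

lemma inv_sq: "cnj (1 / complex_of_real (sqrt (real p))) * (1 / complex_of_real (sqrt (real p))) = 1 / of_nat p"
proof -
  have "cnj (1 / complex_of_real (sqrt (real p))) * (1 / complex_of_real (sqrt (real p)))
     = 1 / (complex_of_real (sqrt (real p)) * complex_of_real (sqrt (real p)))" by simp
  thus ?thesis by (simp only: sqrt_p_sq)
qed

lemma U_rows_nz:
  assumes F: "(al, be, ga, de) \<in> SL2 p" and be: "be \<noteq> 0" and mn: "m < p" "n < p"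
  shows "(\<Sum>a<p. cnj (Uop p (al, be, ga, de) m a) * Uop p (al, be, ga, de) n a) = (if m = n then 1 else 0)"
proof -
  define b where "b = int (zinv p be)"
  have bp: "be < p" using SL2_D[OF F] by simp
  have bi: "int p dvd (int be * b - 1)" using zinv_dvd[of be] be bp unfolding b_def by simp
  have nb: "\<not> int p dvd b" using not_dvd_of_unit[of b "int be"] bi by (simp add: mult.commute)
  have "(\<Sum>a<p. cnj (Uop p (al, be, ga, de) m a) * Uop p (al, be, ga, de) n a)
      = (\<Sum>a<p. (1 / of_nat p * E p (b * int de * (int n ^ 2 - int m ^ 2))) * E p (2 * (b * (int m - int n)) * int a))"
  proof (intro sum.cong refl)
    fix a assume "a \<in> {..<p}"
    hence a: "a < p" by simp
    have "cnj (Uop p (al, be, ga, de) m a) * Uop p (al, be, ga, de) n a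
       = (cnj (1 / complex_of_real (sqrt (real p))) * (1 / complex_of_real (sqrt (real p)))) *
         (cnj (E p (b * (int al * int a ^ 2 - 2 * int m * int a + int de * int m ^ 2))) * E p (b * (int al * int a ^ 2 - 2 * int n * int a + int de * int n ^ 2)))"
      using a mn be by (simp add: Uop_nz b_def)
    also have "\<dots> = 1 / of_nat p * E p (b * (int al * int a ^ 2 - 2 * int n * int a + int de * int n ^ 2) - b * (int al * int a ^ 2 - 2 * int m * int a + int de * int m ^ 2))"
      by (simp only: E_diff inv_sq[symmetric] mult_ac)
    also have "b * (int al * int a ^ 2 - 2 * int n * int a + int de * int n ^ 2) - b * (int al * int a ^ 2 - 2 * int m * int a + int de * int m ^ 2)
       = b * int de * (int n ^ 2 - int m ^ 2) + 2 * (b * (int m - int n)) * int a"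
      by (simp add: algebra_simps)
    finally show "cnj (Uop p (al, be, ga, de) m a) * Uop p (al, be, ga, de) n a
      = (1 / of_nat p * E p (b * int de * (int n ^ 2 - int m ^ 2))) * E p (2 * (b * (int m - int n)) * int a)"
      by (simp add: E_add)
  qed
  also have "\<dots> = (1 / of_nat p * E p (b * int de * (int n ^ 2 - int m ^ 2))) * (\<Sum>a<p. E p (2 * (b * (int m - int n)) * int a))"
    by (simp add: sum_distrib_left)
  also have "\<dots> = (if m = n then 1 else 0)"
  proof (cases "m = n")
    case True thus ?thesis using p_pos by (simp add: geom_E')
  next
    case False
    have "\<not> int p dvd (b * (int m - int n))"
    proof
      assume "int p dvd (b * (int m - int n))"
      hence "int p dvd (int m - int n)" using nb prime_int prime_dvd_mult_iff by blast
      thus False using small_dvd mn False by blast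
    qed
    thus ?thesis using False by (simp add: geom_E')
  qed
  finally show ?thesis .
qed


lemma U_cols_nz:
  assumes F: "(al, be, ga, de) \<in> SL2 p" and be: "be \<noteq> 0" and mn: "m < p" "n < p"
  shows "(\<Sum>a<p. cnj (Uop p (al, be, ga, de) a m) * Uop p (al, be, ga, de) a n) = (if m = n then 1 else 0)"
proof -
  define b where "b = int (zinv p be)"
  have bp: "be < p" using SL2_D[OF F] by simp
  have bi: "int p dvd (int be * b - 1)" using zinv_dvd[of be] be bp unfolding b_def by simp
  have nb: "\<not> int p dvd b" using not_dvd_of_unit[of b "int be"] bi by (simp add: mult.commute)
  have "(\<Sum>a<p. cnj (Uop p (al, be, ga, de) a m) * Uop p (al, be, ga, de) a n)
      = (\<Sum>a<p. (1 / of_nat p * E p (b * int al * (int n ^ 2 - int m ^ 2))) * E p (2 * (b * (int m - int n)) * int a))"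
  proof (intro sum.cong refl)
    fix a assume "a \<in> {..<p}"
    hence a: "a < p" by simp
    have "cnj (Uop p (al, be, ga, de) a m) * Uop p (al, be, ga, de) a n
       = (cnj (1 / complex_of_real (sqrt (real p))) * (1 / complex_of_real (sqrt (real p)))) *
         (cnj (E p (b * (int al * int m ^ 2 - 2 * int a * int m + int de * int a ^ 2))) * E p (b * (int al * int n ^ 2 - 2 * int a * int n + int de * int a ^ 2)))"
      using a mn be by (simp add: Uop_nz b_def)
    also have "\<dots> = 1 / of_nat p * E p (b * (int al * int n ^ 2 - 2 * int a * int n + int de * int a ^ 2) - b * (int al * int m ^ 2 - 2 * int a * int m + int de * int a ^ 2))"
      by (simp only: E_diff inv_sq[symmetric] mult_ac)
    also have "b * (int al * int n ^ 2 - 2 * int a * int n + int de * int a ^ 2) - b * (int al * int m ^ 2 - 2 * int a * int m + int de * int a ^ 2)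
       = b * int al * (int n ^ 2 - int m ^ 2) + 2 * (b * (int m - int n)) * int a"
      by (simp add: algebra_simps)
    finally show "cnj (Uop p (al, be, ga, de) a m) * Uop p (al, be, ga, de) a n
      = (1 / of_nat p * E p (b * int al * (int n ^ 2 - int m ^ 2))) * E p (2 * (b * (int m - int n)) * int a)"
      by (simp add: E_add)
  qed
  also have "\<dots> = (1 / of_nat p * E p (b * int al * (int n ^ 2 - int m ^ 2))) * (\<Sum>a<p. E p (2 * (b * (int m - int n)) * int a))"
    by (simp add: sum_distrib_left)
  also have "\<dots> = (if m = n then 1 else 0)"
  proof (cases "m = n")
    case True thus ?thesis using p_pos by (simp add: geom_E')
  next
    case False
    have "\<not> int p dvd (b * (int m - int n))"
    proof
      assume "int p dvd (b * (int m - int n))"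
      hence "int p dvd (int m - int n)" using nb prime_int prime_dvd_mult_iff by blast
      thus False using small_dvd mn False by blast
    qed
    thus ?thesis using False by (simp add: geom_E')
  qed
  finally show ?thesis .
qed

lemma unit_mod_inj: "\<not> int p dvd int al \<Longrightarrow> a < p \<Longrightarrow> a' < p \<Longrightarrow> (al * a) mod p = (al * a') mod p \<Longrightarrow> a = a'"
proof -
  assume h: "\<not> int p dvd int al" "a < p" "a' < p" "(al * a) mod p = (al * a') mod p"
  have "int ((al * a) mod p) = int ((al * a') mod p)" using h(4) by simp
  hence "int (al * a) mod int p = int (al * a') mod int p" by (simp only: zmod_int)
  hence "int p dvd (int (al * a) - int (al * a'))" by (simp only: mod_eq_dvd_iff)
  hence "int p dvd (int al * (int a - int a'))" by (simp add: algebra_simps)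
  hence "int p dvd (int a - int a')" using h(1) prime_int prime_dvd_mult_iff by blast
  thus "a = a'" using small_dvd h by blast
qed

lemma U_rows_z:
  assumes F: "(al, 0, ga, de) \<in> SL2 p" and mn: "m < p" "n < p"
  shows "(\<Sum>a<p. cnj (Uop p (al, 0, ga, de) m a) * Uop p (al, 0, ga, de) n a) = (if m = n then 1 else 0)"
proof -
  have d: "int p dvd (int al * int de - 1)" and ap: "al < p" "de < p" using SL2_D[OF F] by auto
  have nal: "\<not> int p dvd int al" using not_dvd_of_unit d by blast
  have "(\<Sum>a<p. cnj (Uop p (al, 0, ga, de) m a) * Uop p (al, 0, ga, de) n a)
      = (\<Sum>a<p. if a = (de * m) mod p then (if m = n then 1 else 0) else 0)"
  proof (intro sum.cong refl)
    fix a assume "a \<in> {..<p}"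
    hence a: "a < p" by simp
    have iff: "(m = (al * a) mod p) \<longleftrightarrow> a = (de * m) mod p"
    proof
      assume h: "m = (al * a) mod p"
      have "int p dvd (int m - int (al * a))" using eq_mod_iff[OF mn(1)] h by blast
      hence "int p dvd (int a - int (de * m))" using d by simp algebra
      thus "a = (de * m) mod p" using eq_mod_iff[OF a] by blast
    next
      assume h: "a = (de * m) mod p"
      have "int p dvd (int a - int (de * m))" using eq_mod_iff[OF a] h by blast
      hence "int p dvd (int m - int (al * a))" using d by simp algebra
      thus "m = (al * a) mod p" using eq_mod_iff[OF mn(1)] by blast
    qed
    show "cnj (Uop p (al, 0, ga, de) m a) * Uop p (al, 0, ga, de) n a = (if a = (de * m) mod p then (if m = n then 1 else 0) else 0)"
      using a mn iff by (auto simp: Uop_z E_cnj_mult)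
  qed
  also have "\<dots> = (if m = n then 1 else 0)" using p_pos by (simp add: sum_single)
  finally show ?thesis .
qed

lemma U_cols_z:
  assumes F: "(al, 0, ga, de) \<in> SL2 p" and mn: "m < p" "n < p"
  shows "(\<Sum>a<p. cnj (Uop p (al, 0, ga, de) a m) * Uop p (al, 0, ga, de) a n) = (if m = n then 1 else 0)"
proof -
  have d: "int p dvd (int al * int de - 1)" using SL2_D[OF F] by auto
  have nal: "\<not> int p dvd int al" using not_dvd_of_unit d by blast
  have "(\<Sum>a<p. cnj (Uop p (al, 0, ga, de) a m) * Uop p (al, 0, ga, de) a n)
      = (\<Sum>a<p. if a = (al * m) mod p then (if m = n then 1 else 0) else 0)"
  proof (intro sum.cong refl)
    fix a assume "a \<in> {..<p}"
    hence a: "a < p" by simp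
    have "(al * m) mod p = (al * n) mod p \<Longrightarrow> m = n" using unit_mod_inj[OF nal mn] by blast
    thus "cnj (Uop p (al, 0, ga, de) a m) * Uop p (al, 0, ga, de) a n = (if a = (al * m) mod p then (if m = n then 1 else 0) else 0)"
      using a mn by (auto simp: Uop_z E_cnj_mult)
  qed
  also have "\<dots> = (if m = n then 1 else 0)" using p_pos by (simp add: sum_single)
  finally show ?thesis .
qed

lemma U_rows:
  assumes F: "F \<in> SL2 p" and mn: "m < p" "n < p"
  shows "(\<Sum>a<p. cnj (Uop p F m a) * Uop p F n a) = (if m = n then 1 else 0)"
proof -
  obtain al be ga de where Fe: "F = (al, be, ga, de)" by (cases F) auto
  show ?thesis
  proof (cases "be = 0")
    case True thus ?thesis using U_rows_z[of al ga de m n] F mn Fe by simp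
  next
    case False thus ?thesis using U_rows_nz[of al be ga de m n] F mn Fe by simp
  qed
qed

lemma U_cols:
  assumes F: "F \<in> SL2 p" and mn: "m < p" "n < p"
  shows "(\<Sum>a<p. cnj (Uop p F a m) * Uop p F a n) = (if m = n then 1 else 0)"
proof -
  obtain al be ga de where Fe: "F = (al, be, ga, de)" by (cases F) auto
  show ?thesis
  proof (cases "be = 0")
    case True thus ?thesis using U_cols_z[of al ga de m n] F mn Fe by simp
  next
    case False thus ?thesis using U_cols_nz[of al be ga de m n] F mn Fe by simp
  qed
qed


lemma sum_Zp2: "(\<Sum>u\<in>Zp2 p. f u) = (\<Sum>u1<p. \<Sum>u2<p. f (u1, u2))"
  unfolding Zp2_def by (simp add: sum.cartesian_product)

lemma mu_inj: "b < p \<Longrightarrow> u1 < p \<Longrightarrow> v1 < p \<Longrightarrow> (b + p - u1) mod p = (b + p - v1) mod p \<Longrightarrow> u1 = v1"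
proof -
  assume h: "b < p" "u1 < p" "v1 < p" "(b + p - u1) mod p = (b + p - v1) mod p"
  have "int ((b + p - u1) mod p) = int ((b + p - v1) mod p)" using h(4) by simp
  hence "int (b + p - u1) mod int p = int (b + p - v1) mod int p" by (simp only: zmod_int)
  hence "int p dvd (int (b + p - u1) - int (b + p - v1))" by (simp only: mod_eq_dvd_iff)
  hence "int p dvd (int v1 - int u1)" using h by (simp add: of_nat_diff)
  thus "u1 = v1" using small_dvd[of v1 u1] h by simp
qed

lemma mu_inj2: "b < p \<Longrightarrow> b' < p \<Longrightarrow> u1 < p \<Longrightarrow> (b + p - u1) mod p = (b' + p - u1) mod p \<Longrightarrow> b = b'"
proof -
  assume h: "b < p" "b' < p" "u1 < p" "(b + p - u1) mod p = (b' + p - u1) mod p"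
  have "int ((b + p - u1) mod p) = int ((b' + p - u1) mod p)" using h(4) by simp
  hence "int (b + p - u1) mod int p = int (b' + p - u1) mod int p" by (simp only: zmod_int)
  hence "int p dvd (int (b + p - u1) - int (b' + p - u1))" by (simp only: mod_eq_dvd_iff)
  hence "int p dvd (int b - int b')" using h by (simp add: of_nat_diff)
  thus "b = b'" using small_dvd h by simp
qed

lemma shift_sum': "u1 < p \<Longrightarrow> (\<Sum>b<p. g ((b + p - u1) mod p)) = (\<Sum>b<p. g b)"
  using shift_sum[of g "p - u1"] by (simp add: add_diff_assoc)

lemma E_mu: "E p (2 * int (u2 * ((b + p - u1) mod p))) = E p (2 * int u2 * int ((b + p - u1) mod p))"
  by (simp add: mult.assoc)

lemma R1:
  assumes F: "F \<in> SL2 p" and u: "u \<in> Zp2 p" and v: "v \<in> Zp2 p"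
  shows "inner2 p (Jstate p F u) (Jstate p F v) = (if u = v then 1 else 0)"
proof -
  obtain u1 u2 v1 v2 where uv: "u = (u1, u2)" "v = (v1, v2)" "u1 < p" "u2 < p" "v1 < p" "v2 < p"
    using u v by (auto simp: Zp2_def)
  define mu where "mu = (\<lambda>b. (b + p - u1) mod p)"
  define mv where "mv = (\<lambda>b. (b + p - v1) mod p)"
  have mup: "mu b < p" "mv b < p" for b using p_pos by (auto simp: mu_def mv_def)
  have inner_b: "(\<Sum>a<p. cnj (Cliff p F u b a) * Cliff p F v b a)
     = (if u1 = v1 then cnj (E p (int (u1 * u2))) * E p (int (v1 * v2)) * E p (2 * (int v2 - int u2) * int (mu b)) else 0)"
    if b: "b < p" for b
  proof -
    have "(\<Sum>a<p. cnj (Cliff p F u b a) * Cliff p F v b a)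
       = (\<Sum>a<p. (cnj (E p (int (u1 * u2)) * E p (2 * int (u2 * mu b))) * (E p (int (v1 * v2)) * E p (2 * int (v2 * mv b)))) * (cnj (Uop p F (mu b) a) * Uop p F (mv b) a))"
      by (intro sum.cong refl) (simp add: Cliff_entry b uv mu_def mv_def mult_ac)
    also have "\<dots> = (cnj (E p (int (u1 * u2)) * E p (2 * int (u2 * mu b))) * (E p (int (v1 * v2)) * E p (2 * int (v2 * mv b)))) * (if mu b = mv b then 1 else 0)"
      by (simp add: sum_distrib_left[symmetric] U_rows[OF F mup(1) mup(2)])
    also have "\<dots> = (if u1 = v1 then cnj (E p (int (u1 * u2))) * E p (int (v1 * v2)) * E p (2 * (int v2 - int u2) * int (mu b)) else 0)"
    proof (cases "u1 = v1")
      case True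
      hence "mv b = mu b" by (simp add: mu_def mv_def)
      moreover have "cnj (E p (2 * int (u2 * mu b))) * E p (2 * int (v2 * mu b)) = E p (2 * (int v2 - int u2) * int (mu b))"
        by (simp add: E_diff[symmetric] algebra_simps)
      ultimately show ?thesis using True by (simp add: mult_ac)
    next
      case False
      hence "mu b \<noteq> mv b" using mu_inj[OF b uv(3) uv(5)] by (auto simp: mu_def mv_def)
      thus ?thesis using False by simp
    qed
    finally show ?thesis .
  qed
  have "inner2 p (Jstate p F u) (Jstate p F v) = (\<Sum>b<p. \<Sum>a<p. cnj (Cliff p F u b a) * Cliff p F v b a) / of_nat p"
    unfolding inner_J by (subst sum.swap) (rule refl)
  also have "\<dots> = (\<Sum>b<p. if u1 = v1 then cnj (E p (int (u1 * u2))) * E p (int (v1 * v2)) * E p (2 * (int v2 - int u2) * int (mu b)) else 0) / of_nat p"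
    by (simp add: inner_b)
  also have "\<dots> = (if u = v then 1 else 0)"
  proof (cases "u1 = v1")
    case False thus ?thesis using uv by simp
  next
    case True
    have "(\<Sum>b<p. E p (2 * (int v2 - int u2) * int (mu b))) = (\<Sum>b<p. E p (2 * (int v2 - int u2) * int b))"
      unfolding mu_def by (rule shift_sum'[OF uv(3)])
    also have "\<dots> = (if u2 = v2 then of_nat p else 0)"
    proof -
      have "int p dvd (int v2 - int u2) \<longleftrightarrow> u2 = v2" using small_dvd[of v2 u2] uv by auto
      thus ?thesis by (simp only: geom_E')
    qed
    finally have s: "(\<Sum>b<p. E p (2 * (int v2 - int u2) * int (mu b))) = (if u2 = v2 then of_nat p else 0)" .
    have "(\<Sum>b<p. if u1 = v1 then cnj (E p (int (u1 * u2))) * E p (int (v1 * v2)) * E p (2 * (int v2 - int u2) * int (mu b)) else 0)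
       = cnj (E p (int (u1 * u2))) * E p (int (v1 * v2)) * (if u2 = v2 then of_nat p else 0)"
      by (simp only: True if_True simp_thms sum_distrib_left[symmetric] s)
    thus ?thesis using True uv p_pos by (auto simp: E_cnj_mult)
  qed
  finally show ?thesis .
qed


lemma J_prod: "a < p \<Longrightarrow> a' < p \<Longrightarrow> cnj (Jstate p F u (a', b')) * Jstate p G v (a, b) = cnj (Cliff p F u b' a') * Cliff p G v b a / of_nat p"
proof -
  assume a: "a < p" "a' < p"
  have "cnj (x / complex_of_real (sqrt (real p))) * (y / complex_of_real (sqrt (real p)))
     = cnj x * y / (complex_of_real (sqrt (real p)) * complex_of_real (sqrt (real p)))" for x y
    by simp
  thus ?thesis using a by (simp only: Jstate_entry if_True sqrt_p_sq)
qed

lemma refl_inj: "b < p \<Longrightarrow> inj_on (\<lambda>u1. (b + p - u1) mod p) {..<p}"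
proof (rule inj_onI)
  fix x y assume "b < p" "x \<in> {..<p}" "y \<in> {..<p}" "(b + p - x) mod p = (b + p - y) mod p"
  thus "x = y" using mu_inj[of b x y] by simp
qed

lemma refl_sum: "b < p \<Longrightarrow> (\<Sum>u1<p. g ((b + p - u1) mod p)) = (\<Sum>m<p. g m)"
  using perm_sum[of "\<lambda>u1. (b + p - u1) mod p", OF _ refl_inj] p_pos by simp

lemma cnj_rearr: "cnj (x1 * y1 * z1) * (x2 * y2 * z2) = (cnj z1 * z2) * ((cnj x1 * x2) * (cnj y1 * (y2::complex)))"
  by (simp only: complex_cnj_mult mult_ac)

lemma Cliff_entry': "j < p \<Longrightarrow> k < p \<Longrightarrow> u1 < p \<Longrightarrow> Cliff p F (u1, u2) j k =
   E p (int (u1 * u2)) * E p (2 * int (u2 * ((j + p - u1) mod p))) * Uop p F ((j + p - u1) mod p) k"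
  using Cliff_entry[of j k "(u1, u2)" F] by simp

lemma R2:
  assumes F: "F \<in> SL2 p" and ab: "a < p" "a' < p" "b < p" "b' < p"
  shows "(\<Sum>u\<in>Zp2 p. cnj (Jstate p F u (a', b')) * Jstate p F u (a, b)) = (if a = a' \<and> b = b' then 1 else 0)"
proof -
  have mup: "(b + p - u1) mod p < p" for u1 b using p_pos by auto
  have inner: "(\<Sum>u2<p. cnj (Cliff p F (u1, u2) b' a') * Cliff p F (u1, u2) b a)
      = (if b = b' then of_nat p * (cnj (Uop p F (((b + p - u1) mod p)) a') * Uop p F (((b + p - u1) mod p)) a) else 0)" if u1: "u1 < p" for u1
  proof -
    have "(\<Sum>u2<p. cnj (Cliff p F (u1, u2) b' a') * Cliff p F (u1, u2) b a)
       = (\<Sum>u2<p. (cnj (Uop p F (((b' + p - u1) mod p)) a') * Uop p F (((b + p - u1) mod p)) a) * E p (2 * (int (((b + p - u1) mod p)) - int (((b' + p - u1) mod p))) * int u2))"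
    proof (intro sum.cong refl)
      fix u2
      have e: "cnj (E p (int (u1 * u2))) * E p (int (u1 * u2)) = 1" by (rule E_cnj_mult)
      have e2: "cnj (E p (2 * int (u2 * ((b' + p - u1) mod p)))) * E p (2 * int (u2 * ((b + p - u1) mod p))) = E p (2 * (int (((b + p - u1) mod p)) - int (((b' + p - u1) mod p))) * int u2)"
      proof -
        define m where "m = (b + p - u1) mod p"
        define m' where "m' = (b' + p - u1) mod p"
        have "2 * int (u2 * m) - 2 * int (u2 * m') = 2 * (int m - int m') * int u2"
          by (simp add: algebra_simps)
        thus ?thesis unfolding m_def[symmetric] m'_def[symmetric] E_cnj_l by simp
      qed
      show "cnj (Cliff p F (u1, u2) b' a') * Cliff p F (u1, u2) b a
         = (cnj (Uop p F (((b' + p - u1) mod p)) a') * Uop p F (((b + p - u1) mod p)) a) * E p (2 * (int (((b + p - u1) mod p)) - int (((b' + p - u1) mod p))) * int u2)"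
      proof -
        have "cnj (Cliff p F (u1, u2) b' a') * Cliff p F (u1, u2) b a
          = (cnj (Uop p F ((b' + p - u1) mod p) a') * Uop p F ((b + p - u1) mod p) a) *
            ((cnj (E p (int (u1 * u2))) * E p (int (u1 * u2))) * (cnj (E p (2 * int (u2 * ((b' + p - u1) mod p)))) * E p (2 * int (u2 * ((b + p - u1) mod p)))))"
          using ab u1 by (simp only: Cliff_entry' cnj_rearr)
        thus ?thesis by (simp only: e e2 mult_1_left)
      qed
    qed
    also have "\<dots> = (cnj (Uop p F (((b' + p - u1) mod p)) a') * Uop p F (((b + p - u1) mod p)) a) * (\<Sum>u2<p. E p (2 * (int (((b + p - u1) mod p)) - int (((b' + p - u1) mod p))) * int u2))"
      by (simp only: sum_distrib_left)
    also have "\<dots> = (if b = b' then of_nat p * (cnj (Uop p F (((b + p - u1) mod p)) a') * Uop p F (((b + p - u1) mod p)) a) else 0)"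
    proof -
      have "int p dvd (int (((b + p - u1) mod p)) - int (((b' + p - u1) mod p))) \<longleftrightarrow> b = b'"
      proof
        assume "int p dvd (int (((b + p - u1) mod p)) - int (((b' + p - u1) mod p)))"
        hence "((b + p - u1) mod p) = ((b' + p - u1) mod p)" using small_dvd mup by blast
        thus "b = b'" using mu_inj2[of b b' u1] ab u1 by blast
      qed simp
      thus ?thesis by (simp only: geom_E') simp
    qed
    finally show ?thesis .
  qed
  have "(\<Sum>u\<in>Zp2 p. cnj (Jstate p F u (a', b')) * Jstate p F u (a, b))
     = (\<Sum>u1<p. \<Sum>u2<p. cnj (Cliff p F (u1, u2) b' a') * Cliff p F (u1, u2) b a) / of_nat p"
    by (simp add: sum_Zp2 J_prod ab sum_divide_distrib)
  also have "\<dots> = (\<Sum>u1<p. if b = b' then of_nat p * (cnj (Uop p F (((b + p - u1) mod p)) a') * Uop p F (((b + p - u1) mod p)) a) else 0) / of_nat p"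
    by (simp add: inner)
  also have "\<dots> = (if a = a' \<and> b = b' then 1 else 0)"
  proof (cases "b = b'")
    case False thus ?thesis by simp
  next
    case True
    have "(\<Sum>u1<p. cnj (Uop p F (((b + p - u1) mod p)) a') * Uop p F (((b + p - u1) mod p)) a) = (\<Sum>m<p. cnj (Uop p F m a') * Uop p F m a)"
      by (rule refl_sum[OF ab(3)])
    also have "\<dots> = (if a' = a then 1 else 0)" by (rule U_cols[OF F ab(2) ab(1)])
    finally have s: "(\<Sum>u1<p. cnj (Uop p F (((b + p - u1) mod p)) a') * Uop p F (((b + p - u1) mod p)) a) = (if a' = a then 1 else 0)" .
    have "(\<Sum>u1<p. if b = b' then of_nat p * (cnj (Uop p F (((b + p - u1) mod p)) a') * Uop p F (((b + p - u1) mod p)) a) else 0)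
        = of_nat p * (if a' = a then 1 else 0)"
      by (simp only: eqTrueI[OF True] if_True sum_distrib_left[symmetric] s)
    thus ?thesis using True p_pos by auto
  qed
  finally show ?thesis .
qed

lemma R3:
  assumes F: "F \<in> SL2 p" and u: "u \<in> Zp2 p" and a: "a < p" "a' < p"
  shows "(\<Sum>b<p. Jstate p F u (a, b) * cnj (Jstate p F u (a', b))) = (if a = a' then 1 / of_nat p else 0)"
proof -
  obtain u1 u2 where uu: "u = (u1, u2)" "u1 < p" "u2 < p" using u by (auto simp: Zp2_def)
  have "(\<Sum>b<p. Jstate p F u (a, b) * cnj (Jstate p F u (a', b))) = (\<Sum>b<p. cnj (Cliff p F u b a') * Cliff p F u b a) / of_nat p"
  proof -
    have "Jstate p F u (a, b) * cnj (Jstate p F u (a', b)) = cnj (Cliff p F u b a') * Cliff p F u b a / of_nat p" for b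
      by (subst mult.commute) (rule J_prod[OF a(1) a(2)])
    thus ?thesis by (simp add: sum_divide_distrib)
  qed
  also have "(\<Sum>b<p. cnj (Cliff p F u b a') * Cliff p F u b a) = (\<Sum>b<p. cnj (Uop p F ((b + p - u1) mod p) a') * Uop p F ((b + p - u1) mod p) a)"
  proof (intro sum.cong refl)
    fix b assume "b \<in> {..<p}"
    hence b: "b < p" by simp
    have "cnj (Cliff p F u b a') * Cliff p F u b a
      = (cnj (Uop p F ((b + p - u1) mod p) a') * Uop p F ((b + p - u1) mod p) a) *
        ((cnj (E p (int (u1 * u2))) * E p (int (u1 * u2))) * (cnj (E p (2 * int (u2 * ((b + p - u1) mod p)))) * E p (2 * int (u2 * ((b + p - u1) mod p)))))"
      using a b uu by (simp only: Cliff_entry' cnj_rearr)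
    thus "cnj (Cliff p F u b a') * Cliff p F u b a = cnj (Uop p F ((b + p - u1) mod p) a') * Uop p F ((b + p - u1) mod p) a"
      by (simp only: E_cnj_mult mult_1_left mult_1_right)
  qed
  also have "\<dots> = (\<Sum>m<p. cnj (Uop p F m a') * Uop p F m a)" by (rule shift_sum'[OF uu(2)])
  also have "\<dots> = (if a' = a then 1 else 0)" by (rule U_cols[OF F a(2) a(1)])
  finally show ?thesis by auto
qed


lemma J_inj: "F \<in> SL2 p \<Longrightarrow> u \<in> Zp2 p \<Longrightarrow> v \<in> Zp2 p \<Longrightarrow> Jstate p F u = Jstate p F v \<Longrightarrow> u = v"
proof (rule ccontr)
  assume a: "F \<in> SL2 p" "u \<in> Zp2 p" "v \<in> Zp2 p" "Jstate p F u = Jstate p F v" "u \<noteq> v"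
  have "inner2 p (Jstate p F u) (Jstate p F v) = 0" using R1[OF a(1-3)] a(5) by simp
  moreover have "inner2 p (Jstate p F u) (Jstate p F v) = 1" using R1[OF a(1) a(2) a(2)] a(4) by simp
  ultimately show False by simp
qed

lemma J_inj_on: "F \<in> SL2 p \<Longrightarrow> inj_on (Jstate p F) (Zp2 p)"
  by (rule inj_onI) (rule J_inj)

lemma J_V2: "Jstate p F u \<in> V2 p"
  unfolding V2_def by (auto simp: Jstate_entry Cliff_out)

lemma J_out: "\<not> (a < p \<and> b < p) \<Longrightarrow> Jstate p F u (a, b) = 0"
  by (auto simp: Jstate_entry Cliff_out)

lemma onb:
  assumes F: "F \<in> SL2 p"
  shows "is_onb p (basisF p F)"
  unfolding is_onb_def
proof (intro conjI ballI)
  show "finite (basisF p F)" unfolding basisF_def Zp2_def by simp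
  show "basisF p F \<subseteq> V2 p" unfolding basisF_def using J_V2 by blast
next
  fix x y assume "x \<in> basisF p F" "y \<in> basisF p F"
  then obtain u v where uv: "u \<in> Zp2 p" "v \<in> Zp2 p" "x = Jstate p F u" "y = Jstate p F v"
    unfolding basisF_def by blast
  have "(x = y) = (u = v)" using J_inj[OF F uv(1) uv(2)] uv by blast
  thus "inner2 p x y = (if x = y then 1 else 0)" using R1[OF F uv(1) uv(2)] uv by simp
next
  fix \<psi> assume psi: "\<psi> \<in> V2 p"
  show "\<psi> = (\<lambda>ab. \<Sum>b\<in>basisF p F. inner2 p b \<psi> * b ab)"
  proof
    fix ab :: "nat \<times> nat"
    obtain a b where ab: "ab = (a, b)" by (cases ab) auto
    have "(\<Sum>x\<in>basisF p F. inner2 p x \<psi> * x ab) = (\<Sum>u\<in>Zp2 p. inner2 p (Jstate p F u) \<psi> * Jstate p F u ab)"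
      unfolding basisF_def by (rule sum.reindex[OF J_inj_on[OF F], unfolded comp_def])
    also have "\<dots> = (\<Sum>u\<in>Zp2 p. \<Sum>a'<p. \<Sum>b'<p. \<psi> (a', b') * (cnj (Jstate p F u (a', b')) * Jstate p F u (a, b)))"
      unfolding inner2_def sum_distrib_right ab by (simp only: mult_ac)
    also have "\<dots> = (\<Sum>a'<p. \<Sum>b'<p. \<psi> (a', b') * (\<Sum>u\<in>Zp2 p. cnj (Jstate p F u (a', b')) * Jstate p F u (a, b)))"
    proof -
      have "(\<Sum>u\<in>Zp2 p. \<Sum>a'<p. \<Sum>b'<p. \<psi> (a', b') * (cnj (Jstate p F u (a', b')) * Jstate p F u (a, b)))
          = (\<Sum>a'<p. \<Sum>u\<in>Zp2 p. \<Sum>b'<p. \<psi> (a', b') * (cnj (Jstate p F u (a', b')) * Jstate p F u (a, b)))"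
        by (rule sum.swap)
      also have "\<dots> = (\<Sum>a'<p. \<Sum>b'<p. \<Sum>u\<in>Zp2 p. \<psi> (a', b') * (cnj (Jstate p F u (a', b')) * Jstate p F u (a, b)))"
        by (rule sum.cong[OF refl], rule sum.swap)
      finally show ?thesis by (simp only: sum_distrib_left)
    qed
    also have "\<dots> = \<psi> ab"
    proof (cases "a < p \<and> b < p")
      case True
      have "(\<Sum>a'<p. \<Sum>b'<p. \<psi> (a', b') * (\<Sum>u\<in>Zp2 p. cnj (Jstate p F u (a', b')) * Jstate p F u (a, b)))
         = (\<Sum>a'<p. if a' = a then (\<Sum>b'<p. if b' = b then \<psi> (a, b) else 0) else 0)"
        using True by (intro sum.cong refl) (auto simp: R2[OF F] sum_single_r)
      also have "\<dots> = \<psi> (a, b)" using True by (simp add: sum_single)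
      finally show ?thesis using ab by simp
    next
      case False
      hence "\<psi> ab = 0" using psi ab unfolding V2_def by auto
      thus ?thesis using False by (simp add: J_out)
    qed
    finally show "\<psi> ab = (\<Sum>x\<in>basisF p F. inner2 p x \<psi> * x ab)" by simp
  qed
qed

lemma maxent:
  assumes F: "F \<in> SL2 p" and u: "u \<in> Zp2 p"
  shows "max_ent p (Jstate p F u)"
  unfolding max_ent_def
proof (intro conjI allI impI)
  show "Jstate p F u \<in> V2 p" by (rule J_V2)
  show "inner2 p (Jstate p F u) (Jstate p F u) = 1" using R1[OF F u u] by simp
  fix a a' assume "a < p" "a' < p"
  thus "(\<Sum>b<p. Jstate p F u (a, b) * cnj (Jstate p F u (a', b))) = (if a = a' then 1 / of_nat p else 0)"
    by (rule R3[OF F u])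
qed


definition Tr :: "mat2 \<Rightarrow> mat2 \<Rightarrow> int" where
  "Tr F1 F2 = (case F1 of (a1, b1, c1, d1) \<Rightarrow> case F2 of (a2, b2, c2, d2) \<Rightarrow>
     int d1 * int a2 - int b1 * int c2 - int c1 * int b2 + int a1 * int d2)"

lemma Tr_sym: "Tr F1 F2 = Tr F2 F1"
  by (cases F1, cases F2) (simp add: Tr_def algebra_simps)

lemma tr_lemma:
  assumes F1: "F1 \<in> SL2 p" and F2: "F2 \<in> SL2 p"
  shows "int p dvd (int (m2tr p (m2mul p (m2inv p F1) F2)) - Tr F1 F2)"
proof -
  obtain a1 b1 c1 d1 where f1: "F1 = (a1, b1, c1, d1)" by (cases F1) auto
  obtain a2 b2 c2 d2 where f2: "F2 = (a2, b2, c2, d2)" by (cases F2) auto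
  have lt: "b1 < p" "c1 < p" using SL2_D F1 f1 by auto
  define bb where "bb = (p - b1) mod p"
  define cc where "cc = (p - c1) mod p"
  define TL where "TL = (d1 * a2 + bb * c2) mod p"
  define BR where "BR = (cc * b2 + a1 * d2) mod p"
  have tr: "m2tr p (m2mul p (m2inv p F1) F2) = (TL + BR) mod p"
    by (simp add: f1 f2 m2inv_def m2mul_def m2tr_def TL_def BR_def bb_def cc_def)
  have h1: "int p dvd (int ((TL + BR) mod p) - (int TL + int BR))" using mod_dvd[of "TL + BR"] by simp
  have h2: "int p dvd (int TL - (int d1 * int a2 + int bb * int c2))" using mod_dvd[of "d1 * a2 + bb * c2"] by (simp add: TL_def)
  have h3: "int p dvd (int BR - (int cc * int b2 + int a1 * int d2))" using mod_dvd[of "cc * b2 + a1 * d2"] by (simp add: BR_def)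
  have h4: "int p dvd (int bb - (int p - int b1))" using mod_dvd[of "p - b1"] lt by (simp add: bb_def of_nat_diff)
  have h5: "int p dvd (int cc - (int p - int c1))" using mod_dvd[of "p - c1"] lt by (simp add: cc_def of_nat_diff)
  have "int p dvd (int ((TL + BR) mod p) - (int d1 * int a2 - int b1 * int c2 - int c1 * int b2 + int a1 * int d2))"
    using h1 h2 h3 h4 h5 by algebra
  thus ?thesis unfolding tr by (simp add: f1 f2 Tr_def)
qed

lemma tr_cond:
  assumes F1: "F1 \<in> SL2 p" and F2: "F2 \<in> SL2 p" and c: "m2tr p (m2mul p (m2inv p F1) F2) \<noteq> 2 mod p"
  shows "\<not> int p dvd (Tr F1 F2 - 2)"
proof
  assume h: "int p dvd (Tr F1 F2 - 2)"
  have lt: "m2tr p (m2mul p (m2inv p F1) F2) < p" using p_pos by (cases F1, cases F2) (simp add: m2tr_def m2mul_def m2inv_def)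
  have "int p dvd (int (m2tr p (m2mul p (m2inv p F1) F2)) - 2)" using tr_lemma[OF F1 F2] h by algebra
  hence "int p dvd (int (m2tr p (m2mul p (m2inv p F1) F2)) - int 2)" by simp
  hence "m2tr p (m2mul p (m2inv p F1) F2) = 2 mod p" using eq_mod_iff[OF lt] by blast
  thus False using c by simp
qed

lemma inner2_cnj: "inner2 p x y = cnj (inner2 p y x)"
  by (simp add: inner2_def mult.commute)

lemma nz_ndvd: "0 < b \<Longrightarrow> b < p \<Longrightarrow> \<not> int p dvd int b"
proof
  assume "0 < b" "b < p" "int p dvd int b"
  hence "b = 0" using small_dvd[of b 0] p_pos by simp
  thus False using \<open>0 < b\<close> by simp
qed

lemma dvd_cancel2: "\<not> int p dvd x \<Longrightarrow> \<not> int p dvd y \<Longrightarrow> int p dvd (x * y * z) \<Longrightarrow> int p dvd z"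
  using prime_int prime_dvd_mult_iff by blast

lemma mub_nn:
  assumes F1: "(a1, b1, c1, d1) \<in> SL2 p" and F2: "(a2, b2, c2, d2) \<in> SL2 p"
    and nb: "b1 \<noteq> 0" "b2 \<noteq> 0" and T: "\<not> int p dvd (Tr (a1, b1, c1, d1) (a2, b2, c2, d2) - 2)"
    and u: "u \<in> Zp2 p" and v: "v \<in> Zp2 p"
  shows "cmod (inner2 p (Jstate p (a1, b1, c1, d1) u) (Jstate p (a2, b2, c2, d2) v)) = 1 / real p"
proof -
  obtain u1 u2 v1 v2 where uv: "u = (u1, u2)" "v = (v1, v2)" "u1 < p" "u2 < p" "v1 < p" "v2 < p"
    using u v by (auto simp: Zp2_def)
  have s1: "a1 < p" "b1 < p" "c1 < p" "d1 < p" and det1: "int p dvd (int a1 * int d1 - int b1 * int c1 - 1)"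
    using SL2_D[OF F1] by auto
  have s2: "a2 < p" "b2 < p" "c2 < p" "d2 < p" and det2: "int p dvd (int a2 * int d2 - int b2 * int c2 - 1)"
    using SL2_D[OF F2] by auto
  define k1 where "k1 = int (zinv p b1)"
  define k2 where "k2 = int (zinv p b2)"
  have i1: "int p dvd (int b1 * k1 - 1)" using zinv_dvd[of b1] nb s1 unfolding k1_def by simp
  have i2: "int p dvd (int b2 * k2 - 1)" using zinv_dvd[of b2] nb s2 unfolding k2_def by simp
  define A where "A = k2 * int a2 - k1 * int a1"
  define C where "C = k2 * int d2 - k1 * int d1"
  define B where "B = k1 - k2"
  define D where "D = k2 * int v1 - k1 * int u1"
  define G where "G = k1 * int d1 * int u1 - k2 * int d2 * int v1 - int u2 + int v2"
  define K where "K = k2 * int d2 * int v1 ^ 2 - k1 * int d1 * int u1 ^ 2 - 2 * int v1 * int v2 + 2 * int u1 * int u2"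
  have nd: "\<not> int p dvd (A * C - B ^ 2)"
  proof
    assume h: "int p dvd (A * C - B ^ 2)"
    have "int p dvd (int b1 * int b2 * (Tr (a1, b1, c1, d1) (a2, b2, c2, d2) - 2))"
      using h i1 i2 det1 det2 unfolding A_def B_def C_def Tr_def by simp algebra
    hence "int p dvd (Tr (a1, b1, c1, d1) (a2, b2, c2, d2) - 2)"
      using dvd_cancel2 nz_ndvd nb s1 s2 by blast
    thus False using T by simp
  qed
  have trm: "cnj (Cliff p (a1, b1, c1, d1) u b a) * Cliff p (a2, b2, c2, d2) v b a
     = (cnj (E p (int (u1 * u2))) * E p (int (v1 * v2)) / of_nat p) *
       E p (A * int a ^ 2 + C * int b ^ 2 + 2 * (B * int a * int b + D * int a + G * int b) + K)"
    if ab: "a < p" "b < p" for a b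
  proof -
    define x1 where "x1 = (b + p - u1) mod p"
    define x2 where "x2 = (b + p - v1) mod p"
    define \<Psi> where "\<Psi> = (\<lambda>x y. (2 * int v2 * y + k2 * (int a2 * int a ^ 2 - 2 * y * int a + int d2 * y ^ 2))
                    - (2 * int u2 * x + k1 * (int a1 * int a ^ 2 - 2 * x * int a + int d1 * x ^ 2)))"
    have "cnj (Cliff p (a1, b1, c1, d1) u b a) * Cliff p (a2, b2, c2, d2) v b a
       = (cnj (E p (int (u1 * u2))) * E p (int (v1 * v2))) * (cnj (1 / complex_of_real (sqrt (real p))) * (1 / complex_of_real (sqrt (real p))))
         * (cnj (E p (2 * int (u2 * x1))) * E p (2 * int (v2 * x2)) * (cnj (E p (k1 * (int a1 * int a ^ 2 - 2 * int (x1) * int a + int d1 * int (x1) ^ 2))) * E p (k2 * (int a2 * int a ^ 2 - 2 * int (x2) * int a + int d2 * int (x2) ^ 2))))"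
    proof -
      have mp: "x1 < p" "x2 < p" using p_pos by (auto simp: x1_def x2_def)
      show ?thesis using ab uv mp nb
        by (simp only: Cliff_entry' Uop_nz x1_def[symmetric] x2_def[symmetric] k1_def[symmetric] k2_def[symmetric]
             complex_cnj_mult mult_ac not_False_eq_True)
    qed
    also have "\<dots> = (cnj (E p (int (u1 * u2))) * E p (int (v1 * v2)) / of_nat p) * E p (\<Psi> (int (x1)) (int (x2)))"
      by (simp only: inv_sq E_cnj_l E_add[symmetric] \<Psi>_def) (simp add: algebra_simps)
    also have d1: "int p dvd (int x1 - (int b - int u1))"
    proof -
      have "int p dvd (int x1 - int (b + p - u1))" using mod_dvd[of "b + p - u1"] by (simp add: x1_def)
      moreover have "int (b + p - u1) = int b + int p - int u1" using uv by simp
      ultimately show ?thesis by algebra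
    qed
    have d2: "int p dvd (int x2 - (int b - int v1))"
    proof -
      have "int p dvd (int x2 - int (b + p - v1))" using mod_dvd[of "b + p - v1"] by (simp add: x2_def)
      moreover have "int (b + p - v1) = int b + int p - int v1" using uv by simp
      ultimately show ?thesis by algebra
    qed
    have "E p (\<Psi> (int (x1)) (int (x2))) = E p (\<Psi> (int b - int u1) (int (x2)))"
      by (rule E_shape'[OF d1, of "\<lambda>x. \<Psi> x (int x2)" "- k1 * int d1" "k1 * int a - int u2" "2 * int v2 * int (x2) + k2 * (int a2 * int a ^ 2 - 2 * int (x2) * int a + int d2 * int (x2) ^ 2) - k1 * int a1 * int a ^ 2"])
         (simp add: \<Psi>_def power2_eq_square algebra_simps)
    also have "\<dots> = E p (\<Psi> (int b - int u1) (int b - int v1))"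
      by (rule E_shape'[OF d2, of "\<lambda>y. \<Psi> (int b - int u1) y" "k2 * int d2" "int v2 - k2 * int a" "k2 * int a2 * int a ^ 2 - (2 * int u2 * (int b - int u1) + k1 * (int a1 * int a ^ 2 - 2 * (int b - int u1) * int a + int d1 * (int b - int u1) ^ 2))"])
         (simp add: \<Psi>_def power2_eq_square algebra_simps)
    also have "\<Psi> (int b - int u1) (int b - int v1) = A * int a ^ 2 + C * int b ^ 2 + 2 * (B * int a * int b + D * int a + G * int b) + K"
      unfolding \<Psi>_def A_def B_def C_def D_def G_def K_def by algebra
    finally show ?thesis .
  qed
  have "inner2 p (Jstate p (a1, b1, c1, d1) u) (Jstate p (a2, b2, c2, d2) v)
      = (cnj (E p (int (u1 * u2))) * E p (int (v1 * v2)) / of_nat p) *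
        (\<Sum>a<p. \<Sum>b<p. E p (A * int a ^ 2 + C * int b ^ 2 + 2 * (B * int a * int b + D * int a + G * int b) + K)) / of_nat p"
    unfolding inner_J by (simp add: trm sum_distrib_left)
  hence "cmod (inner2 p (Jstate p (a1, b1, c1, d1) u) (Jstate p (a2, b2, c2, d2) v)) = (1 / real p) * real p / real p"
    using gauss2[OF nd] by (simp add: norm_mult norm_divide)
  thus ?thesis using p_pos by simp
qed


lemma cmod_inv_sqrt: "cmod (1 / complex_of_real (sqrt (real p))) = 1 / sqrt (real p)"
  by (simp add: norm_divide)

lemma mub_zn:
  assumes F1: "(a1, 0, c1, d1) \<in> SL2 p" and F2: "(a2, b2, c2, d2) \<in> SL2 p"
    and nb: "b2 \<noteq> 0" and T: "\<not> int p dvd (Tr (a1, 0, c1, d1) (a2, b2, c2, d2) - 2)"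
    and u: "u \<in> Zp2 p" and v: "v \<in> Zp2 p"
  shows "cmod (inner2 p (Jstate p (a1, 0, c1, d1) u) (Jstate p (a2, b2, c2, d2) v)) = 1 / real p"
proof -
  obtain u1 u2 v1 v2 where uv: "u = (u1, u2)" "v = (v1, v2)" "u1 < p" "u2 < p" "v1 < p" "v2 < p"
    using u v by (auto simp: Zp2_def)
  have s1: "a1 < p" "c1 < p" "d1 < p" and det1: "int p dvd (int a1 * int d1 - 1)"
    using SL2_D[OF F1] by auto
  have s2: "a2 < p" "b2 < p" "c2 < p" "d2 < p" and det2: "int p dvd (int a2 * int d2 - int b2 * int c2 - 1)"
    using SL2_D[OF F2] by auto
  define k2 where "k2 = int (zinv p b2)"
  have i2: "int p dvd (int b2 * k2 - 1)" using zinv_dvd[of b2] nb s2 unfolding k2_def by simp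
  define w where "w = int u1 - int v1"
  define A where "A = - int a1 * int c1 + k2 * (int a2 - 2 * int a1 + int d2 * int a1 ^ 2)"
  define D where "D = - int u2 * int a1 + int v2 * int a1 - k2 * w + k2 * int d2 * int a1 * w"
  define K where "K = 2 * int v2 * w + k2 * int d2 * w ^ 2"
  have nd: "\<not> int p dvd A"
  proof
    assume h: "int p dvd A"
    have "int p dvd (int a1 * (Tr (a1, 0, c1, d1) (a2, b2, c2, d2) - 2))"
      using h i2 det1 det2 unfolding A_def Tr_def by simp algebra
    moreover have "\<not> int p dvd int a1" using not_dvd_of_unit det1 by blast
    ultimately have "int p dvd (Tr (a1, 0, c1, d1) (a2, b2, c2, d2) - 2)"
      using prime_int prime_dvd_mult_iff by blast
    thus False using T by simp
  qed
  define Z where "Z = cnj (E p (int (u1 * u2))) * E p (int (v1 * v2)) * (1 / complex_of_real (sqrt (real p))) * E p K"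
  have col: "(\<Sum>b<p. cnj (Cliff p (a1, 0, c1, d1) u b a) * Cliff p (a2, b2, c2, d2) v b a) = Z * E p (A * int a ^ 2 + 2 * D * int a)"
    if a: "a < p" for a
  proof -
    define m where "m = (a1 * a) mod p"
    define bs where "bs = (m + u1) mod p"
    define y where "y = (bs + p - v1) mod p"
    have mp: "m < p" "bs < p" "y < p" using p_pos by (auto simp: m_def bs_def y_def)
    have "(\<Sum>b<p. cnj (Cliff p (a1, 0, c1, d1) u b a) * Cliff p (a2, b2, c2, d2) v b a)
      = (\<Sum>b<p. if b = bs then cnj (E p (int (u1 * u2)) * E p (2 * int (u2 * m)) * E p (int (a1 * c1 * a ^ 2))) * Cliff p (a2, b2, c2, d2) v bs a else 0)"
    proof (intro sum.cong refl)
      fix b assume "b \<in> {..<p}"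
      hence b: "b < p" by simp
      have iff: "((b + p - u1) mod p = m) \<longleftrightarrow> b = bs"
        using idx_shift[OF mp(1) b uv(3)] unfolding bs_def by auto
      show "cnj (Cliff p (a1, 0, c1, d1) u b a) * Cliff p (a2, b2, c2, d2) v b a
        = (if b = bs then cnj (E p (int (u1 * u2)) * E p (2 * int (u2 * m)) * E p (int (a1 * c1 * a ^ 2))) * Cliff p (a2, b2, c2, d2) v bs a else 0)"
      proof (cases "b = bs")
        case True
        hence "(b + p - u1) mod p = m" using iff by simp
        thus ?thesis using True b a uv by (simp add: Cliff_entry' Uop_z m_def)
      next
        case False
        hence "(b + p - u1) mod p \<noteq> (a1 * a) mod p" using iff m_def by simp
        thus ?thesis using False b a uv p_pos by (simp add: Cliff_entry' Uop_z)
      qed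
    qed
    also have "\<dots> = cnj (E p (int (u1 * u2)) * E p (2 * int (u2 * m)) * E p (int (a1 * c1 * a ^ 2))) * Cliff p (a2, b2, c2, d2) v bs a"
      using mp by (simp add: sum_single)
    also have "\<dots> = cnj (E p (int (u1 * u2))) * E p (int (v1 * v2)) * (1 / complex_of_real (sqrt (real p))) *
       E p ((2 * int v2 * int y + k2 * (int a2 * int a ^ 2 - 2 * int y * int a + int d2 * int y ^ 2)) - (2 * int u2 * int m + int a1 * int c1 * int a ^ 2))"
    proof -
      have "Cliff p (a2, b2, c2, d2) v bs a = E p (int (v1 * v2)) * E p (2 * int (v2 * y)) * ((1 / complex_of_real (sqrt (real p))) * E p (k2 * (int a2 * int a ^ 2 - 2 * int y * int a + int d2 * int y ^ 2)))"
        using mp a uv nb by (simp add: Cliff_entry' Uop_nz y_def k2_def)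
      hence "cnj (E p (int (u1 * u2)) * E p (2 * int (u2 * m)) * E p (int (a1 * c1 * a ^ 2))) * Cliff p (a2, b2, c2, d2) v bs a
         = (cnj (E p (int (u1 * u2))) * E p (int (v1 * v2)) * (1 / complex_of_real (sqrt (real p)))) *
           (cnj (E p (2 * int (u2 * m) + int (a1 * c1 * a ^ 2))) * E p (2 * int (v2 * y) + k2 * (int a2 * int a ^ 2 - 2 * int y * int a + int d2 * int y ^ 2)))"
        by (simp only: E_add complex_cnj_mult mult_ac)
      also have "\<dots> = (cnj (E p (int (u1 * u2))) * E p (int (v1 * v2)) * (1 / complex_of_real (sqrt (real p)))) *
           E p ((2 * int v2 * int y + k2 * (int a2 * int a ^ 2 - 2 * int y * int a + int d2 * int y ^ 2)) - (2 * int u2 * int m + int a1 * int c1 * int a ^ 2))"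
        by (simp only: E_cnj_l) (simp add: algebra_simps)
      finally show ?thesis .
    qed
    also have "E p ((2 * int v2 * int y + k2 * (int a2 * int a ^ 2 - 2 * int y * int a + int d2 * int y ^ 2)) - (2 * int u2 * int m + int a1 * int c1 * int a ^ 2))
       = E p ((2 * int v2 * int y + k2 * (int a2 * int a ^ 2 - 2 * int y * int a + int d2 * int y ^ 2)) - (2 * int u2 * (int a1 * int a) + int a1 * int c1 * int a ^ 2))"
    proof -
      have d: "int p dvd (int m - int a1 * int a)" using mod_dvd[of "a1 * a"] by (simp add: m_def)
      show ?thesis
        by (rule E_shape'[OF d, of "\<lambda>x. (2 * int v2 * int y + k2 * (int a2 * int a ^ 2 - 2 * int y * int a + int d2 * int y ^ 2)) - (2 * int u2 * x + int a1 * int c1 * int a ^ 2)"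
             0 "- int u2" "(2 * int v2 * int y + k2 * (int a2 * int a ^ 2 - 2 * int y * int a + int d2 * int y ^ 2)) - int a1 * int c1 * int a ^ 2"])
           (simp add: algebra_simps)
    qed
    also have "\<dots> = E p ((2 * int v2 * (int a1 * int a + w) + k2 * (int a2 * int a ^ 2 - 2 * (int a1 * int a + w) * int a + int d2 * (int a1 * int a + w) ^ 2)) - (2 * int u2 * (int a1 * int a) + int a1 * int c1 * int a ^ 2))"
    proof -
      have h1: "int p dvd (int y - int (bs + p - v1))" using mod_dvd[of "bs + p - v1"] by (simp add: y_def)
      have h2: "int (bs + p - v1) = int bs + int p - int v1" using uv by simp
      have h3: "int p dvd (int bs - (int m + int u1))" using mod_dvd[of "m + u1"] by (simp add: bs_def)
      have h4: "int p dvd (int m - int a1 * int a)" using mod_dvd[of "a1 * a"] by (simp add: m_def)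
      have d: "int p dvd (int y - (int a1 * int a + w))" using h1 h2 h3 h4 unfolding w_def by algebra
      show ?thesis
        by (rule E_shape'[OF d, of "\<lambda>x. (2 * int v2 * x + k2 * (int a2 * int a ^ 2 - 2 * x * int a + int d2 * x ^ 2)) - (2 * int u2 * (int a1 * int a) + int a1 * int c1 * int a ^ 2)"
             "k2 * int d2" "int v2 - k2 * int a" "k2 * int a2 * int a ^ 2 - (2 * int u2 * (int a1 * int a) + int a1 * int c1 * int a ^ 2)"])
           (simp add: power2_eq_square algebra_simps)
    qed
    also have "(2 * int v2 * (int a1 * int a + w) + k2 * (int a2 * int a ^ 2 - 2 * (int a1 * int a + w) * int a + int d2 * (int a1 * int a + w) ^ 2)) - (2 * int u2 * (int a1 * int a) + int a1 * int c1 * int a ^ 2)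
       = K + (A * int a ^ 2 + 2 * D * int a)"
      unfolding A_def D_def K_def by algebra
    finally show ?thesis by (simp only: E_add Z_def mult_ac)
  qed
  have "inner2 p (Jstate p (a1, 0, c1, d1) u) (Jstate p (a2, b2, c2, d2) v)
      = Z * (\<Sum>a<p. E p (A * int a ^ 2 + 2 * D * int a)) / of_nat p"
    unfolding inner_J by (simp add: col sum_distrib_left)
  moreover have "cmod Z = 1 / sqrt (real p)" unfolding Z_def by (simp only: norm_mult cmod_inv_sqrt complex_mod_cnj norm_E mult_1_left mult_1_right)
  ultimately have "cmod (inner2 p (Jstate p (a1, 0, c1, d1) u) (Jstate p (a2, b2, c2, d2) v)) = (1 / sqrt (real p)) * sqrt (real p) / real p"
    using gauss1[OF nd] by (simp add: norm_mult norm_divide)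
  thus ?thesis using p_pos by simp
qed


lemma C_z_entry: "b < p \<Longrightarrow> a < p \<Longrightarrow> u1 < p \<Longrightarrow>
  Cliff p (a1, 0, c1, d1) (u1, u2) b a = (if b = ((a1 * a) mod p + u1) mod p then
     E p (int (u1 * u2)) * E p (2 * int (u2 * ((a1 * a) mod p))) * E p (int (a1 * c1 * a ^ 2)) else 0)"
proof -
  assume h: "b < p" "a < p" "u1 < p"
  have mp: "(a1 * a) mod p < p" using p_pos by simp
  have iff: "((b + p - u1) mod p = (a1 * a) mod p) \<longleftrightarrow> b = ((a1 * a) mod p + u1) mod p"
    using idx_shift[OF mp h(1) h(3)] by auto
  show ?thesis
  proof (cases "b = ((a1 * a) mod p + u1) mod p")
    case True
    hence "(b + p - u1) mod p = (a1 * a) mod p" using iff by simp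
    thus ?thesis using True h by (simp add: Cliff_entry' Uop_z)
  next
    case False
    hence "(b + p - u1) mod p \<noteq> (a1 * a) mod p" using iff by simp
    thus ?thesis using False h p_pos by (simp add: Cliff_entry' Uop_z)
  qed
qed

lemma mub_zz:
  assumes F1: "(a1, 0, c1, d1) \<in> SL2 p" and F2: "(a2, 0, c2, d2) \<in> SL2 p"
    and T: "\<not> int p dvd (Tr (a1, 0, c1, d1) (a2, 0, c2, d2) - 2)"
    and u: "u \<in> Zp2 p" and v: "v \<in> Zp2 p"
  shows "cmod (inner2 p (Jstate p (a1, 0, c1, d1) u) (Jstate p (a2, 0, c2, d2) v)) = 1 / real p"
proof -
  obtain u1 u2 v1 v2 where uv: "u = (u1, u2)" "v = (v1, v2)" "u1 < p" "u2 < p" "v1 < p" "v2 < p"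
    using u v by (auto simp: Zp2_def)
  have s1: "a1 < p" and det1: "int p dvd (int a1 * int d1 - 1)" using SL2_D[OF F1] by auto
  have s2: "a2 < p" and det2: "int p dvd (int a2 * int d2 - 1)" using SL2_D[OF F2] by auto
  have na1: "\<not> int p dvd int a1" using not_dvd_of_unit det1 by blast
  have na2: "\<not> int p dvd int a2" using not_dvd_of_unit det2 by blast
  have nd: "\<not> int p dvd (int a1 - int a2)"
  proof
    assume h: "int p dvd (int a1 - int a2)"
    have "int p dvd (int a1 * int a2 * (Tr (a1, 0, c1, d1) (a2, 0, c2, d2) - 2))"
      using h det1 det2 unfolding Tr_def by simp algebra
    hence "int p dvd (Tr (a1, 0, c1, d1) (a2, 0, c2, d2) - 2)" using dvd_cancel2 na1 na2 by blast
    thus False using T by simp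
  qed
  define bs1 where "bs1 = (\<lambda>a. ((a1 * a) mod p + u1) mod p)"
  define bs2 where "bs2 = (\<lambda>a. ((a2 * a) mod p + v1) mod p)"
  define X1 where "X1 = (\<lambda>a. E p (int (u1 * u2)) * E p (2 * int (u2 * ((a1 * a) mod p))) * E p (int (a1 * c1 * a ^ 2)))"
  define X2 where "X2 = (\<lambda>a. E p (int (v1 * v2)) * E p (2 * int (v2 * ((a2 * a) mod p))) * E p (int (a2 * c2 * a ^ 2)))"
  have bsp: "bs1 a < p" "bs2 a < p" for a using p_pos by (auto simp: bs1_def bs2_def)
  have col: "(\<Sum>b<p. cnj (Cliff p (a1, 0, c1, d1) u b a) * Cliff p (a2, 0, c2, d2) v b a) = (if bs1 a = bs2 a then cnj (X1 a) * X2 a else 0)"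
    if a: "a < p" for a
  proof -
    have "(\<Sum>b<p. cnj (Cliff p (a1, 0, c1, d1) u b a) * Cliff p (a2, 0, c2, d2) v b a)
        = (\<Sum>b<p. if b = bs1 a then (if bs1 a = bs2 a then cnj (X1 a) * X2 a else 0) else 0)"
      by (intro sum.cong refl) (use a uv in \<open>auto simp: C_z_entry bs1_def bs2_def X1_def X2_def\<close>)
    thus ?thesis using bsp by (simp add: sum_single)
  qed
  have key: "bs1 a = bs2 a \<longleftrightarrow> int p dvd ((int a1 - int a2) * int a + (int u1 - int v1))" if a: "a < p" for a
  proof -
    have h1: "int p dvd (int (bs1 a) - (int a1 * int a + int u1))"
    proof -
      have "int p dvd (int (bs1 a) - int ((a1 * a) mod p + u1))" using mod_dvd[of "(a1 * a) mod p + u1"] by (simp add: bs1_def)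
      moreover have "int p dvd (int ((a1 * a) mod p) - int a1 * int a)" using mod_dvd[of "a1 * a"] by simp
      ultimately show ?thesis by simp algebra
    qed
    have h2: "int p dvd (int (bs2 a) - (int a2 * int a + int v1))"
    proof -
      have "int p dvd (int (bs2 a) - int ((a2 * a) mod p + v1))" using mod_dvd[of "(a2 * a) mod p + v1"] by (simp add: bs2_def)
      moreover have "int p dvd (int ((a2 * a) mod p) - int a2 * int a)" using mod_dvd[of "a2 * a"] by simp
      ultimately show ?thesis by simp algebra
    qed
    show ?thesis
    proof
      assume "bs1 a = bs2 a"
      hence "int p dvd (int (bs1 a) - (int a2 * int a + int v1))" using h2 by simp
      hence "int p dvd ((int (bs1 a) - (int a2 * int a + int v1)) - (int (bs1 a) - (int a1 * int a + int u1)))"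
        using h1 by (rule dvd_diff)
      moreover have "(int (bs1 a) - (int a2 * int a + int v1)) - (int (bs1 a) - (int a1 * int a + int u1))
          = (int a1 - int a2) * int a + (int u1 - int v1)" by (simp add: algebra_simps)
      ultimately show "int p dvd ((int a1 - int a2) * int a + (int u1 - int v1))" by simp
    next
      assume "int p dvd ((int a1 - int a2) * int a + (int u1 - int v1))"
      hence "int p dvd (int (bs1 a) - int (bs2 a))" using h1 h2 by algebra
      thus "bs1 a = bs2 a" using small_dvd bsp by blast
    qed
  qed
  obtain a0 where a0: "a0 < p" "bs1 a0 = bs2 a0"
  proof -
    define f where "f = (\<lambda>a. ((a1 + p - a2) * a) mod p)"
    have nal: "\<not> int p dvd int (a1 + p - a2)"
    proof
      assume "int p dvd int (a1 + p - a2)"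
      moreover have "int (a1 + p - a2) = int a1 + int p - int a2" using s2 by simp
      ultimately have "int p dvd (int a1 - int a2)" by algebra
      thus False using nd by simp
    qed
    have "inj_on f {..<p}"
    proof (rule inj_onI)
      fix x y assume "x \<in> {..<p}" "y \<in> {..<p}" "f x = f y"
      thus "x = y" using unit_mod_inj[OF nal, of x y] unfolding f_def by simp
    qed
    hence "f ` {..<p} = {..<p}" using p_pos by (intro endo_inj_surj) (auto simp: f_def)
    moreover have "(v1 + p - u1) mod p \<in> {..<p}" using p_pos by simp
    ultimately obtain a where a: "a < p" "f a = (v1 + p - u1) mod p" by (metis imageE lessThan_iff)
    have "int p dvd ((int a1 - int a2) * int a + (int u1 - int v1))"
    proof -
      have "int p dvd (int (f a) - int ((a1 + p - a2) * a))" using mod_dvd unfolding f_def by blast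
      moreover have "int p dvd (int ((v1 + p - u1) mod p) - int (v1 + p - u1))" using mod_dvd by blast
      moreover have "int ((a1 + p - a2) * a) = (int a1 + int p - int a2) * int a" using s2 by simp
      moreover have "int (v1 + p - u1) = int v1 + int p - int u1" using uv by simp
      moreover have "int (f a) = int ((v1 + p - u1) mod p)" using a(2) by simp
      ultimately show ?thesis by algebra
    qed
    thus thesis using that a(1) key[OF a(1)] by blast
  qed
  have uniq: "a = a0" if a: "a < p" "bs1 a = bs2 a" for a
  proof -
    have "int p dvd ((int a1 - int a2) * int a + (int u1 - int v1))" using key a by blast
    moreover have "int p dvd ((int a1 - int a2) * int a0 + (int u1 - int v1))" using key a0 by blast
    ultimately have "int p dvd ((int a1 - int a2) * (int a - int a0))" by algebra
    hence "int p dvd (int a - int a0)" using nd prime_int prime_dvd_mult_iff by blast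
    thus "a = a0" using small_dvd a a0 by blast
  qed
  have "inner2 p (Jstate p (a1, 0, c1, d1) u) (Jstate p (a2, 0, c2, d2) v)
     = (\<Sum>a<p. if bs1 a = bs2 a then cnj (X1 a) * X2 a else 0) / of_nat p"
    unfolding inner_J by (simp add: col)
  also have "(\<Sum>a<p. if bs1 a = bs2 a then cnj (X1 a) * X2 a else 0) = (\<Sum>a<p. if a = a0 then cnj (X1 a0) * X2 a0 else 0)"
  proof (intro sum.cong refl)
    fix a assume "a \<in> {..<p}"
    hence "a < p" by simp
    show "(if bs1 a = bs2 a then cnj (X1 a) * X2 a else 0) = (if a = a0 then cnj (X1 a0) * X2 a0 else 0)"
    proof (cases "a = a0")
      case True thus ?thesis using a0 by simp
    next
      case False
      hence "bs1 a \<noteq> bs2 a" using uniq \<open>a < p\<close> by blast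
      thus ?thesis using False by simp
    qed
  qed
  also have "\<dots> = cnj (X1 a0) * X2 a0" using a0 by (simp add: sum_single)
  finally have "inner2 p (Jstate p (a1, 0, c1, d1) u) (Jstate p (a2, 0, c2, d2) v) = cnj (X1 a0) * X2 a0 / of_nat p" .
  moreover have "cmod (cnj (X1 a0) * X2 a0) = 1" by (simp add: X1_def X2_def norm_mult)
  ultimately show ?thesis by (simp add: norm_divide)
qed


lemma E_lin: "int p dvd (m' - m) \<Longrightarrow> E p (2 * t * m' + r) = E p (2 * t * m + r)"
  using E_shape[of m' m 0 t r] by simp

lemma E_kill: "int p dvd P1 \<Longrightarrow> int p dvd P2 \<Longrightarrow> E p (Q + 2 * a * P1 + 2 * m * P2) = E p Q"
proof -
  assume "int p dvd P1" "int p dvd P2"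
  then obtain t1 t2 where t: "P1 = int p * t1" "P2 = int p * t2" unfolding dvd_def by blast
  have eq: "Q + 2 * a * P1 + 2 * m * P2 = Q + 2 * int p * (a * t1 + m * t2)" by (simp add: t algebra_simps)
  show ?thesis by (subst eq) (rule E_period1[OF p_pos])
qed

lemma U_cov_nz:
  assumes F: "(al, be, ga, de) \<in> SL2 p" and nb: "be \<noteq> 0" and x: "x1 < p" "x2 < p" "y1 < p"
    and y1: "int p dvd (int y1 - (int al * int x1 - int be * int x2))"
    and y2: "int p dvd (int y2 - (int ga * int x1 - int de * int x2))"
  shows "\<exists>c. \<forall>m<p. \<forall>a<p. E p (2 * int x2 * int a + 2 * int y2 * int m) * Uop p (al, be, ga, de) ((m + p - y1) mod p) ((a + p - x1) mod p)
           = c * Uop p (al, be, ga, de) m a"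
proof -
  have s: "al < p" "be < p" "ga < p" "de < p" and det: "int p dvd (int al * int de - int be * int ga - 1)"
    using SL2_D[OF F] by auto
  define k where "k = int (zinv p be)"
  have ik: "int p dvd (int be * k - 1)" using zinv_dvd[of be] nb s unfolding k_def by simp
  define Q where "Q = (\<lambda>m a::int. k * (int al * a ^ 2 - 2 * m * a + int de * m ^ 2))"
  define K where "K = k * (int al * int x1 ^ 2 - 2 * int y1 * int x1 + int de * int y1 ^ 2)"
  define P1 where "P1 = int x2 + k * (int y1 - int al * int x1)"
  define P2 where "P2 = int y2 + k * (int x1 - int de * int y1)"
  have dP1: "int p dvd P1" unfolding P1_def using y1 ik by algebra
  have dP2: "int p dvd P2" unfolding P2_def using y1 y2 ik det by algebra
  show ?thesis
  proof (intro exI allI impI)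
    fix m a assume ma: "m < p" "a < p"
    define ms where "ms = (m + p - y1) mod p"
    define as where "as = (a + p - x1) mod p"
    have msp: "ms < p" "as < p" using p_pos by (auto simp: ms_def as_def)
    have dm: "int p dvd (int ms - (int m - int y1))"
    proof -
      have "int p dvd (int ms - int (m + p - y1))" using mod_dvd[of "m + p - y1"] by (simp add: ms_def)
      moreover have "int (m + p - y1) = int m + int p - int y1" using x by simp
      ultimately show ?thesis by algebra
    qed
    have da: "int p dvd (int as - (int a - int x1))"
    proof -
      have "int p dvd (int as - int (a + p - x1))" using mod_dvd[of "a + p - x1"] by (simp add: as_def)
      moreover have "int (a + p - x1) = int a + int p - int x1" using x by simp
      ultimately show ?thesis by algebra
    qed
    have "E p (2 * int x2 * int a + 2 * int y2 * int m) * Uop p (al, be, ga, de) ms as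
        = (1 / complex_of_real (sqrt (real p))) * E p (2 * int x2 * int a + 2 * int y2 * int m + Q (int ms) (int as))"
      using msp nb by (simp add: Uop_nz Q_def k_def E_add)
    also have "E p (2 * int x2 * int a + 2 * int y2 * int m + Q (int ms) (int as)) = E p (2 * int x2 * int a + 2 * int y2 * int m + Q (int m - int y1) (int as))"
      by (rule E_shape'[OF dm, of "\<lambda>z. 2 * int x2 * int a + 2 * int y2 * int m + Q z (int as)" "k * int de" "- k * int as" "2 * int x2 * int a + 2 * int y2 * int m + k * int al * int as ^ 2"])
         (simp add: Q_def power2_eq_square algebra_simps)
    also have "\<dots> = E p (2 * int x2 * int a + 2 * int y2 * int m + Q (int m - int y1) (int a - int x1))"
      by (rule E_shape'[OF da, of "\<lambda>z. 2 * int x2 * int a + 2 * int y2 * int m + Q (int m - int y1) z" "k * int al" "- k * (int m - int y1)" "2 * int x2 * int a + 2 * int y2 * int m + k * int de * (int m - int y1) ^ 2"])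
         (simp add: Q_def power2_eq_square algebra_simps)
    also have "2 * int x2 * int a + 2 * int y2 * int m + Q (int m - int y1) (int a - int x1) = (Q (int m) (int a) + K) + 2 * int a * P1 + 2 * int m * P2"
      unfolding Q_def K_def P1_def P2_def by algebra
    also have "E p ((Q (int m) (int a) + K) + 2 * int a * P1 + 2 * int m * P2) = E p (Q (int m) (int a) + K)"
      by (rule E_kill[OF dP1 dP2])
    finally show "E p (2 * int x2 * int a + 2 * int y2 * int m) * Uop p (al, be, ga, de) ((m + p - y1) mod p) ((a + p - x1) mod p)
        = E p K * Uop p (al, be, ga, de) m a"
      using ma nb by (simp add: ms_def as_def Uop_nz Q_def k_def E_add mult_ac)
  qed
qed


lemma U_cov_z:
  assumes F: "(al, 0, ga, de) \<in> SL2 p" and x: "x1 < p" "x2 < p" "y1 < p"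
    and y1: "int p dvd (int y1 - int al * int x1)"
    and y2: "int p dvd (int y2 - (int ga * int x1 - int de * int x2))"
  shows "\<exists>c. \<forall>m<p. \<forall>a<p. E p (2 * int x2 * int a + 2 * int y2 * int m) * Uop p (al, 0, ga, de) ((m + p - y1) mod p) ((a + p - x1) mod p)
           = c * Uop p (al, 0, ga, de) m a"
proof -
  have s: "al < p" "ga < p" "de < p" and det: "int p dvd (int al * int de - 1)"
    using SL2_D[OF F] by auto
  define c where "c = E p (int al * int ga * int x1 ^ 2)"
  show ?thesis
  proof (intro exI allI impI)
    fix m a assume ma: "m < p" "a < p"
    define ms where "ms = (m + p - y1) mod p"
    define as where "as = (a + p - x1) mod p"
    have msp: "ms < p" "as < p" using p_pos by (auto simp: ms_def as_def)
    have dm: "int p dvd (int ms - (int m - int y1))"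
    proof -
      have "int p dvd (int ms - int (m + p - y1))" using mod_dvd[of "m + p - y1"] by (simp add: ms_def)
      moreover have "int (m + p - y1) = int m + int p - int y1" using x by simp
      ultimately show ?thesis by algebra
    qed
    have da: "int p dvd (int as - (int a - int x1))"
    proof -
      have "int p dvd (int as - int (a + p - x1))" using mod_dvd[of "a + p - x1"] by (simp add: as_def)
      moreover have "int (a + p - x1) = int a + int p - int x1" using x by simp
      ultimately show ?thesis by algebra
    qed
    have supp: "(ms = (al * as) mod p) \<longleftrightarrow> (m = (al * a) mod p)"
    proof -
      have "(ms = (al * as) mod p) \<longleftrightarrow> int p dvd (int ms - int al * int as)"
        using eq_mod_iff[OF msp(1)] by simp
      also have "\<dots> \<longleftrightarrow> int p dvd (int m - int al * int a)"
      proof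
        assume "int p dvd (int ms - int al * int as)"
        thus "int p dvd (int m - int al * int a)" using dm da y1 by algebra
      next
        assume "int p dvd (int m - int al * int a)"
        thus "int p dvd (int ms - int al * int as)" using dm da y1 by algebra
      qed
      also have "\<dots> \<longleftrightarrow> (m = (al * a) mod p)" using eq_mod_iff[OF ma(1)] by simp
      finally show ?thesis .
    qed
    show "E p (2 * int x2 * int a + 2 * int y2 * int m) * Uop p (al, 0, ga, de) ((m + p - y1) mod p) ((a + p - x1) mod p)
        = c * Uop p (al, 0, ga, de) m a"
    proof (cases "m = (al * a) mod p")
      case False
      hence "ms \<noteq> (al * as) mod p" using supp by simp
      thus ?thesis using False ma msp by (simp add: Uop_z ms_def[symmetric] as_def[symmetric])
    next
      case True
      hence ms_s: "ms = (al * as) mod p" using supp by simp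
      have dm2: "int p dvd (int m - int al * int a)" using True eq_mod_iff[OF ma(1)] by simp
      have "E p (2 * int x2 * int a + 2 * int y2 * int m) * Uop p (al, 0, ga, de) ms as
          = E p (2 * int y2 * int m + (2 * int x2 * int a + int al * int ga * int as ^ 2))"
        using ms_s msp by (simp add: Uop_z E_add[symmetric] algebra_simps)
      also have "\<dots> = E p (2 * int y2 * (int al * int a) + (2 * int x2 * int a + int al * int ga * int as ^ 2))"
        by (rule E_lin[OF dm2])
      also have "\<dots> = E p (2 * int y2 * (int al * int a) + (2 * int x2 * int a + int al * int ga * (int a - int x1) ^ 2))"
        by (rule E_shape'[OF da, of "\<lambda>z. 2 * int y2 * (int al * int a) + (2 * int x2 * int a + int al * int ga * z ^ 2)" "int al * int ga" 0 "2 * int y2 * (int al * int a) + 2 * int x2 * int a"])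
           (simp add: algebra_simps)
      also have "2 * int y2 * (int al * int a) + (2 * int x2 * int a + int al * int ga * (int a - int x1) ^ 2)
          = (int al * int ga * int a ^ 2 + int al * int ga * int x1 ^ 2) + 2 * int a * (int x2 + int al * int y2 - int al * int ga * int x1) + 2 * int m * 0"
        by algebra
      also have "E p ((int al * int ga * int a ^ 2 + int al * int ga * int x1 ^ 2) + 2 * int a * (int x2 + int al * int y2 - int al * int ga * int x1) + 2 * int m * 0)
          = E p (int al * int ga * int a ^ 2 + int al * int ga * int x1 ^ 2)"
      proof (rule E_kill)
        show "int p dvd (int x2 + int al * int y2 - int al * int ga * int x1)" using y2 det by algebra
      qed simp
      finally show ?thesis using True ma by (simp add: ms_def as_def Uop_z c_def E_add mult_ac)
    qed
  qed
qed


lemma E_cong2: "int p dvd (X - Y) \<Longrightarrow> E p (2 * X) = E p (2 * Y)"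
  using E_lin[of X Y 1 0] by simp

definition yF :: "nat \<Rightarrow> mat2 \<Rightarrow> nat \<times> nat \<Rightarrow> nat \<times> nat" where
  "yF q F x = (case F of (al, be, ga, de) \<Rightarrow>
     ((al * fst x + (q - be) * snd x) mod q, (ga * fst x + (q - de) * snd x) mod q))"

lemma yF_props:
  assumes F: "(al, be, ga, de) \<in> SL2 p"
  shows "fst (yF p (al, be, ga, de) x) < p" "snd (yF p (al, be, ga, de) x) < p"
    "int p dvd (int (fst (yF p (al, be, ga, de) x)) - (int al * int (fst x) - int be * int (snd x)))"
    "int p dvd (int (snd (yF p (al, be, ga, de) x)) - (int ga * int (fst x) - int de * int (snd x)))"
proof -
  have s: "be < p" "de < p" using SL2_D[OF F] by auto
  show "fst (yF p (al, be, ga, de) x) < p" "snd (yF p (al, be, ga, de) x) < p"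
    using p_pos by (auto simp: yF_def)
  have "int p dvd (int (fst (yF p (al, be, ga, de) x)) - int (al * fst x + (p - be) * snd x))"
    unfolding yF_def prod.case fst_conv by (rule mod_dvd)
  moreover have "int (al * fst x + (p - be) * snd x) = int al * int (fst x) + (int p - int be) * int (snd x)"
    using s by (simp add: of_nat_diff)
  ultimately show "int p dvd (int (fst (yF p (al, be, ga, de) x)) - (int al * int (fst x) - int be * int (snd x)))"
    by algebra
  have "int p dvd (int (snd (yF p (al, be, ga, de) x)) - int (ga * fst x + (p - de) * snd x))"
    unfolding yF_def prod.case snd_conv by (rule mod_dvd)
  moreover have "int (ga * fst x + (p - de) * snd x) = int ga * int (fst x) + (int p - int de) * int (snd x)"
    using s by (simp add: of_nat_diff)
  ultimately show "int p dvd (int (snd (yF p (al, be, ga, de) x)) - (int ga * int (fst x) - int de * int (snd x)))"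
    by algebra
qed

lemma U_cov:
  assumes F: "F \<in> SL2 p" and x: "x \<in> Zp2 p"
  shows "\<exists>c. \<forall>m<p. \<forall>a<p. E p (2 * int (snd x) * int a + 2 * int (snd (yF p F x)) * int m) *
            Uop p F ((m + p - fst (yF p F x)) mod p) ((a + p - fst x) mod p) = c * Uop p F m a"
proof -
  obtain al be ga de where Fe: "F = (al, be, ga, de)" by (cases F) auto
  obtain x1 x2 where xe: "x = (x1, x2)" "x1 < p" "x2 < p" using x by (auto simp: Zp2_def)
  note yp = yF_props[OF F[unfolded Fe], of x]
  show ?thesis
  proof (cases "be = 0")
    case True
    show ?thesis
      using U_cov_z[of al ga de x1 x2 "fst (yF p F x)" "snd (yF p F x)"] F xe yp True Fe by simp
  next
    case False
    show ?thesis
      using U_cov_nz[of al be ga de x1 x2 "fst (yF p F x)" "snd (yF p F x)"] F xe yp False Fe by simp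
  qed
qed

lemma D_apply: "a < p \<Longrightarrow> x1 < p \<Longrightarrow> (\<Sum>a'<p. Dop p (x1, x2) a a' * g a') =
   E p (int (x1 * x2)) * E p (2 * int (x2 * ((a + p - x1) mod p))) * g ((a + p - x1) mod p)"
proof -
  assume h: "a < p" "x1 < p"
  have "(\<Sum>a'<p. Dop p (x1, x2) a a' * g a') = (\<Sum>a'<p. if a' = (a + p - x1) mod p then E p (int (x1 * x2)) * E p (2 * int (x2 * a')) * g a' else 0)"
  proof (intro sum.cong refl)
    fix a' assume "a' \<in> {..<p}"
    hence a': "a' < p" by simp
    show "Dop p (x1, x2) a a' * g a' = (if a' = (a + p - x1) mod p then E p (int (x1 * x2)) * E p (2 * int (x2 * a')) * g a' else 0)"
      using idx_shift[OF a' h(1) h(2)] h a' by (simp add: Dop_entry)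
  qed
  also have "\<dots> = E p (int (x1 * x2)) * E p (2 * int (x2 * ((a + p - x1) mod p))) * g ((a + p - x1) mod p)"
    using p_pos by (simp add: sum_single)
  finally show ?thesis .
qed

lemma D_out: "\<not> a < p \<Longrightarrow> Dop p x a a' = 0"
  by (simp add: Dop_entry)

lemma eig:
  assumes F: "F \<in> SL2 p" and u: "u \<in> Zp2 p" and x: "x \<in> Zp2 p"
  shows "\<exists>c. kron_apply p (Dop p x) (Dop p (yF p F x)) (Jstate p F u) = (\<lambda>ab. c * Jstate p F u ab)"
proof -
  obtain al be ga de where Fe: "F = (al, be, ga, de)" by (cases F) auto
  obtain x1 x2 where xe: "x = (x1, x2)" "x1 < p" "x2 < p" using x by (auto simp: Zp2_def)
  obtain u1 u2 where ue: "u = (u1, u2)" "u1 < p" "u2 < p" using u by (auto simp: Zp2_def)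
  define y1 where "y1 = fst (yF p F x)"
  define y2 where "y2 = snd (yF p F x)"
  have yp: "y1 < p" "y2 < p" using yF_props[OF F[unfolded Fe], of x] by (auto simp: y1_def y2_def Fe)
  obtain c where c: "\<forall>m<p. \<forall>a<p. E p (2 * int x2 * int a + 2 * int y2 * int m) *
            Uop p F ((m + p - y1) mod p) ((a + p - x1) mod p) = c * Uop p F m a"
    using U_cov[OF F x] xe y1_def y2_def by auto
  define K0 where "K0 = - int x2 * int x1 + int y2 * (int u1 - int y1) - int u2 * int y1"
  define cc where "cc = E p (int (x1 * x2)) * E p (int (y1 * y2)) * E p (2 * K0) * c"
  show ?thesis
  proof (intro exI ext)
    fix ab :: "nat \<times> nat"
    obtain a b where ab: "ab = (a, b)" by (cases ab) auto
    show "kron_apply p (Dop p x) (Dop p (yF p F x)) (Jstate p F u) ab = cc * Jstate p F u ab"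
    proof (cases "a < p \<and> b < p")
      case False
      hence "Jstate p F u ab = 0" using ab J_out by simp
      moreover have "kron_apply p (Dop p x) (Dop p (yF p F x)) (Jstate p F u) ab = 0"
        using False ab by (auto simp: kron_apply_def D_out)
      ultimately show ?thesis by simp
    next
      case True
      hence a: "a < p" and b: "b < p" by auto
      define as where "as = (a + p - x1) mod p"
      define bs where "bs = (b + p - y1) mod p"
      define m where "m = (b + p - u1) mod p"
      define ms where "ms = (bs + p - u1) mod p"
      have lt: "as < p" "bs < p" "m < p" "ms < p" using p_pos by (auto simp: as_def bs_def m_def ms_def)
      have da: "int p dvd (int as - (int a - int x1))"
      proof -
        have "int p dvd (int as - int (a + p - x1))" using mod_dvd[of "a + p - x1"] by (simp add: as_def)
        moreover have "int (a + p - x1) = int a + int p - int x1" using xe by simp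
        ultimately show ?thesis by algebra
      qed
      have db: "int p dvd (int bs - (int b - int y1))"
      proof -
        have "int p dvd (int bs - int (b + p - y1))" using mod_dvd[of "b + p - y1"] by (simp add: bs_def)
        moreover have "int (b + p - y1) = int b + int p - int y1" using yp by simp
        ultimately show ?thesis by algebra
      qed
      have dm: "int p dvd (int m - (int b - int u1))"
      proof -
        have "int p dvd (int m - int (b + p - u1))" using mod_dvd[of "b + p - u1"] by (simp add: m_def)
        moreover have "int (b + p - u1) = int b + int p - int u1" using ue by simp
        ultimately show ?thesis by algebra
      qed
      have dms: "int p dvd (int ms - (int bs - int u1))"
      proof -
        have "int p dvd (int ms - int (bs + p - u1))" using mod_dvd[of "bs + p - u1"] by (simp add: ms_def)
        moreover have "int (bs + p - u1) = int bs + int p - int u1" using ue by simp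
        ultimately show ?thesis by algebra
      qed
      have ms_eq: "ms = (m + p - y1) mod p"
      proof -
        have d2: "int p dvd (int ((m + p - y1) mod p) - int (m + p - y1))" using mod_dvd by blast
        have "int (m + p - y1) = int m + int p - int y1" using yp by simp
        hence "int p dvd (int ms - int ((m + p - y1) mod p))" using d2 dms db dm by algebra
        thus ?thesis using small_dvd lt p_pos by simp
      qed
      have "kron_apply p (Dop p x) (Dop p (yF p F x)) (Jstate p F u) ab
          = (\<Sum>a'<p. Dop p (x1, x2) a a' * (\<Sum>b'<p. Dop p (y1, y2) b b' * Jstate p F u (a', b')))"
        by (simp add: ab kron_apply_def xe y1_def y2_def sum_distrib_left mult_ac)
      also have "\<dots> = E p (int (x1 * x2)) * E p (2 * int (x2 * as)) * (E p (int (y1 * y2)) * E p (2 * int (y2 * bs)) * Jstate p F u (as, bs))"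
        by (simp only: D_apply[OF a xe(2)] D_apply[OF b yp(1)] as_def bs_def)
      also have "Jstate p F u (as, bs) = E p (int (u1 * u2)) * E p (2 * int (u2 * ms)) * Uop p F ms as / complex_of_real (sqrt (real p))"
        using lt ue by (simp add: Jstate_entry Cliff_entry' ms_def)
      also have "E p (int (x1 * x2)) * E p (2 * int (x2 * as)) * (E p (int (y1 * y2)) * E p (2 * int (y2 * bs)) * (E p (int (u1 * u2)) * E p (2 * int (u2 * ms)) * Uop p F ms as / complex_of_real (sqrt (real p))))
          = (E p (int (x1 * x2)) * E p (int (y1 * y2))) * E p (2 * (int x2 * int as + int y2 * int bs + int u2 * int ms)) * (E p (int (u1 * u2)) * Uop p F ms as / complex_of_real (sqrt (real p)))"
        by (simp add: E_add algebra_simps)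
      also have "E p (2 * (int x2 * int as + int y2 * int bs + int u2 * int ms)) = E p (2 * ((int x2 * int a + int y2 * int m) + int u2 * int m + K0))"
        by (rule E_cong2) (use da db dm dms in \<open>unfold K0_def; algebra\<close>)
      also have "E p (2 * ((int x2 * int a + int y2 * int m) + int u2 * int m + K0)) = E p (2 * int x2 * int a + 2 * int y2 * int m) * E p (2 * int (u2 * m)) * E p (2 * K0)"
        by (simp add: E_add[symmetric] algebra_simps)
      finally have "kron_apply p (Dop p x) (Dop p (yF p F x)) (Jstate p F u) ab
          = (E p (int (x1 * x2)) * E p (int (y1 * y2)) * E p (2 * K0)) * (E p (int (u1 * u2)) * E p (2 * int (u2 * m)) / complex_of_real (sqrt (real p))) *
            (E p (2 * int x2 * int a + 2 * int y2 * int m) * Uop p F ((m + p - y1) mod p) ((a + p - x1) mod p))"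
        by (simp add: ms_eq as_def mult_ac)
      also have "E p (2 * int x2 * int a + 2 * int y2 * int m) * Uop p F ((m + p - y1) mod p) ((a + p - x1) mod p) = c * Uop p F m a"
        using c lt a by blast
      also have "Jstate p F u ab = E p (int (u1 * u2)) * E p (2 * int (u2 * m)) * Uop p F m a / complex_of_real (sqrt (real p))"
        using a b ab ue by (simp add: Jstate_entry Cliff_entry' m_def)
      ultimately show ?thesis by (simp add: cc_def mult_ac)
    qed
  qed
qed


lemma yF_Zp2: "F \<in> SL2 p \<Longrightarrow> yF p F x \<in> Zp2 p"
  using p_pos by (cases F) (auto simp: yF_def Zp2_def)

lemma lag:
  assumes F: "F \<in> SL2 p"
  shows "lagrangian p ((\<lambda>x. (x, yF p F x)) ` Zp2 p)"
proof -
  obtain al be ga de where Fe: "F = (al, be, ga, de)" by (cases F) auto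
  have F': "(al, be, ga, de) \<in> SL2 p" using F Fe by simp
  have det: "int p dvd (int al * int de - int be * int ga - 1)" using SL2_D[OF F'] by simp
  note yp = yF_props[OF F']
  define L where "L = (\<lambda>x. (x, yF p F x)) ` Zp2 p"
  have sub: "L \<subseteq> Zp2 p \<times> Zp2 p" unfolding L_def using yF_Zp2[OF F] by auto
  have zero: "((0, 0), (0, 0)) \<in> L"
  proof -
    have "yF p F (0, 0) = (0, 0)" by (simp add: yF_def Fe)
    moreover have "(0, 0) \<in> Zp2 p" using p_pos by (simp add: Zp2_def)
    ultimately show ?thesis unfolding L_def by force
  qed
  have add: "add4 p w w' \<in> L" if w: "w \<in> L" "w' \<in> L" for w w'
  proof -
    obtain x1 x2 x1' x2' where x: "w = ((x1, x2), yF p F (x1, x2))" "w' = ((x1', x2'), yF p F (x1', x2'))"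
      "x1 < p" "x2 < p" "x1' < p" "x2' < p"
      using w unfolding L_def Zp2_def by auto
    define z where "z = ((x1 + x1') mod p, (x2 + x2') mod p)"
    have zZ: "z \<in> Zp2 p" using p_pos by (simp add: z_def Zp2_def)
    obtain y1 y2 where ye: "yF p F (x1, x2) = (y1, y2)" by (cases "yF p F (x1, x2)") auto
    obtain y1' y2' where ye': "yF p F (x1', x2') = (y1', y2')" by (cases "yF p F (x1', x2')") auto
    obtain z1 z2 where ze: "yF p F z = (z1, z2)" by (cases "yF p F z") auto
    have c1: "int p dvd (int y1 - (int al * int x1 - int be * int x2))" "int p dvd (int y2 - (int ga * int x1 - int de * int x2))"
      using yp(3,4)[of "(x1, x2)"] ye Fe by auto
    have c2: "int p dvd (int y1' - (int al * int x1' - int be * int x2'))" "int p dvd (int y2' - (int ga * int x1' - int de * int x2'))"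
      using yp(3,4)[of "(x1', x2')"] ye' Fe by auto
    have c3: "int p dvd (int z1 - (int al * int ((x1 + x1') mod p) - int be * int ((x2 + x2') mod p)))"
      "int p dvd (int z2 - (int ga * int ((x1 + x1') mod p) - int de * int ((x2 + x2') mod p)))"
      using yp(3,4)[of z] ze Fe by (auto simp: z_def)
    have zl: "z1 < p" "z2 < p" using yp(1,2)[of z] ze Fe by auto
    have m1: "int p dvd (int ((x1 + x1') mod p) - (int x1 + int x1'))" using mod_dvd[of "x1 + x1'"] by simp
    have m2: "int p dvd (int ((x2 + x2') mod p) - (int x2 + int x2'))" using mod_dvd[of "x2 + x2'"] by simp
    have m3: "int p dvd (int ((y1 + y1') mod p) - (int y1 + int y1'))" using mod_dvd[of "y1 + y1'"] by simp
    have m4: "int p dvd (int ((y2 + y2') mod p) - (int y2 + int y2'))" using mod_dvd[of "y2 + y2'"] by simp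
    have e1: "(y1 + y1') mod p = z1"
    proof -
      have "int p dvd (int ((y1 + y1') mod p) - int z1)" using c1 c2 c3 m1 m2 m3 by algebra
      thus ?thesis using small_dvd zl p_pos by simp
    qed
    have e2: "(y2 + y2') mod p = z2"
    proof -
      have "int p dvd (int ((y2 + y2') mod p) - int z2)" using c1 c2 c3 m1 m2 m4 by algebra
      thus ?thesis using small_dvd zl p_pos by simp
    qed
    have "add4 p w w' = (z, yF p F z)" using x ye ye' ze e1 e2 by (simp add: add4_def z_def)
    thus ?thesis using zZ unfolding L_def by auto
  qed
  have card: "card L = p ^ 2"
  proof -
    have "inj_on (\<lambda>x. (x, yF p F x)) (Zp2 p)" by (rule inj_onI) auto
    hence "card L = card (Zp2 p)" unfolding L_def by (rule card_image)
    also have "\<dots> = p ^ 2" by (simp add: Zp2_def power2_eq_square)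
    finally show ?thesis .
  qed
  have symp: "symp4 p w w' = 0" if w: "w \<in> L" "w' \<in> L" for w w'
  proof -
    obtain x1 x2 x1' x2' where x: "w = ((x1, x2), yF p F (x1, x2))" "w' = ((x1', x2'), yF p F (x1', x2'))"
      using w unfolding L_def Zp2_def by auto
    obtain y1 y2 where ye: "yF p F (x1, x2) = (y1, y2)" by (cases "yF p F (x1, x2)") auto
    obtain y1' y2' where ye': "yF p F (x1', x2') = (y1', y2')" by (cases "yF p F (x1', x2')") auto
    have c1: "int p dvd (int y1 - (int al * int x1 - int be * int x2))" "int p dvd (int y2 - (int ga * int x1 - int de * int x2))"
      using yp(3,4)[of "(x1, x2)"] ye Fe by auto
    have c2: "int p dvd (int y1' - (int al * int x1' - int be * int x2'))" "int p dvd (int y2' - (int ga * int x1' - int de * int x2'))"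
      using yp(3,4)[of "(x1', x2')"] ye' Fe by auto
    have "int p dvd (int x1 * int x2' - int x2 * int x1' + int y1 * int y2' - int y2 * int y1')"
      using c1 c2 det by algebra
    hence "(int x1 * int x2' - int x2 * int x1' + int y1 * int y2' - int y2 * int y1') mod int p = 0" by simp
    thus ?thesis using x ye ye' by (simp add: symp4_def)
  qed
  show ?thesis unfolding lagrangian_def L_def[symmetric]
    using sub zero add card symp by blast
qed

lemma stab:
  assumes F: "F \<in> SL2 p" and u: "u \<in> Zp2 p"
  shows "stab_state p (Jstate p F u)"
  unfolding stab_state_def
proof (intro conjI)
  show "Jstate p F u \<in> V2 p" by (rule J_V2)
  show "Jstate p F u \<noteq> (\<lambda>_. 0)"
  proof
    assume "Jstate p F u = (\<lambda>_. 0)"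
    hence "inner2 p (Jstate p F u) (Jstate p F u) = 0" by (simp add: inner2_def)
    thus False using R1[OF F u u] by simp
  qed
  show "\<exists>L. lagrangian p L \<and> (\<forall>w\<in>L. \<exists>c. kron_apply p (Dop p (fst w)) (Dop p (snd w)) (Jstate p F u) = (\<lambda>ab. c * Jstate p F u ab))"
  proof (rule exI[of _ "(\<lambda>x. (x, yF p F x)) ` Zp2 p"], intro conjI ballI)
    show "lagrangian p ((\<lambda>x. (x, yF p F x)) ` Zp2 p)" by (rule lag[OF F])
    fix w assume "w \<in> (\<lambda>x. (x, yF p F x)) ` Zp2 p"
    then obtain x where x: "x \<in> Zp2 p" "w = (x, yF p F x)" by blast
    show "\<exists>c. kron_apply p (Dop p (fst w)) (Dop p (snd w)) (Jstate p F u) = (\<lambda>ab. c * Jstate p F u ab)"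
      using eig[OF F u x(1)] x(2) by simp
  qed
qed


lemma mm_def': "m2mul p (a, b, c, d) (a', b', c', d') = ((a*a' + b*c') mod p, (a*b' + b*d') mod p, (c*a' + d*c') mod p, (c*b' + d*d') mod p)"
  by (simp add: m2mul_def)

lemma mm_cong:
  assumes "m2mul p (a, b, c, d) (a', b', c', d') = (e1, e2, e3, e4)"
  shows "int p dvd (int e1 - (int a * int a' + int b * int c'))" "int p dvd (int e2 - (int a * int b' + int b * int d'))"
        "int p dvd (int e3 - (int c * int a' + int d * int c'))" "int p dvd (int e4 - (int c * int b' + int d * int d'))"
        "e1 < p" "e2 < p" "e3 < p" "e4 < p"
proof -
  have e: "e1 = (a*a' + b*c') mod p" "e2 = (a*b' + b*d') mod p" "e3 = (c*a' + d*c') mod p" "e4 = (c*b' + d*d') mod p"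
    using assms by (simp_all add: mm_def')
  show "int p dvd (int e1 - (int a * int a' + int b * int c'))" using mod_dvd[of "a*a' + b*c'"] e by simp
  show "int p dvd (int e2 - (int a * int b' + int b * int d'))" using mod_dvd[of "a*b' + b*d'"] e by simp
  show "int p dvd (int e3 - (int c * int a' + int d * int c'))" using mod_dvd[of "c*a' + d*c'"] e by simp
  show "int p dvd (int e4 - (int c * int b' + int d * int d'))" using mod_dvd[of "c*b' + d*d'"] e by simp
  show "e1 < p" "e2 < p" "e3 < p" "e4 < p" using e p_pos by simp_all
qed

lemma SL2_I: "a < p \<Longrightarrow> b < p \<Longrightarrow> c < p \<Longrightarrow> d < p \<Longrightarrow> int p dvd (int a * int d - int b * int c - 1) \<Longrightarrow> (a, b, c, d) \<in> SL2 p"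
proof -
  assume h: "a < p" "b < p" "c < p" "d < p" "int p dvd (int a * int d - int b * int c - 1)"
  have "(int a * int d - int b * int c) mod int p = 1 mod int p" using h(5) by (simp only: mod_eq_dvd_iff)
  also have "1 mod int p = 1" using p_ge2 by simp
  finally show ?thesis using h by (simp add: SL2_def)
qed

lemma SL2_closed: "x \<in> SL2 p \<Longrightarrow> y \<in> SL2 p \<Longrightarrow> m2mul p x y \<in> SL2 p"
proof -
  assume x: "x \<in> SL2 p" and y: "y \<in> SL2 p"
  obtain a b c d where xe: "x = (a, b, c, d)" by (cases x) auto
  obtain a' b' c' d' where ye: "y = (a', b', c', d')" by (cases y) auto
  obtain e1 e2 e3 e4 where ee: "m2mul p x y = (e1, e2, e3, e4)" by (cases "m2mul p x y") auto
  note mc = mm_cong[OF ee[unfolded xe ye]]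
  have d1: "int p dvd (int a * int d - int b * int c - 1)" using SL2_D x xe by blast
  have d2: "int p dvd (int a' * int d' - int b' * int c' - 1)" using SL2_D y ye by blast
  have "int p dvd (int e1 * int e4 - int e2 * int e3 - 1)" using mc(1-4) d1 d2 by algebra
  thus ?thesis using SL2_I mc(5-8) ee by simp
qed

lemma mat_eq: "e1 < p \<Longrightarrow> e2 < p \<Longrightarrow> e3 < p \<Longrightarrow> e4 < p \<Longrightarrow> f1 < p \<Longrightarrow> f2 < p \<Longrightarrow> f3 < p \<Longrightarrow> f4 < p \<Longrightarrow>
  int p dvd (int e1 - int f1) \<Longrightarrow> int p dvd (int e2 - int f2) \<Longrightarrow> int p dvd (int e3 - int f3) \<Longrightarrow> int p dvd (int e4 - int f4) \<Longrightarrow>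
  (e1, e2, e3, e4) = (f1, f2, f3, f4)"
  using small_dvd by blast

lemma SL2_assoc: "x \<in> SL2 p \<Longrightarrow> y \<in> SL2 p \<Longrightarrow> z \<in> SL2 p \<Longrightarrow> m2mul p (m2mul p x y) z = m2mul p x (m2mul p y z)"
proof -
  assume x: "x \<in> SL2 p" and y: "y \<in> SL2 p" and z: "z \<in> SL2 p"
  obtain a b c d where xe: "x = (a, b, c, d)" by (cases x) auto
  obtain a' b' c' d' where ye: "y = (a', b', c', d')" by (cases y) auto
  obtain a'' b'' c'' d'' where ze: "z = (a'', b'', c'', d'')" by (cases z) auto
  obtain e1 e2 e3 e4 where e: "m2mul p x y = (e1, e2, e3, e4)" by (cases "m2mul p x y") auto
  obtain f1 f2 f3 f4 where f: "m2mul p y z = (f1, f2, f3, f4)" by (cases "m2mul p y z") auto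
  obtain g1 g2 g3 g4 where g: "m2mul p (e1, e2, e3, e4) z = (g1, g2, g3, g4)" by (cases "m2mul p (e1, e2, e3, e4) z") auto
  obtain h1 h2 h3 h4 where h: "m2mul p x (f1, f2, f3, f4) = (h1, h2, h3, h4)" by (cases "m2mul p x (f1, f2, f3, f4)") auto
  note ce = mm_cong[OF e[unfolded xe ye]]
  note cf = mm_cong[OF f[unfolded ye ze]]
  note cg = mm_cong[OF g[unfolded ze]]
  note ch = mm_cong[OF h[unfolded xe]]
  have "(g1, g2, g3, g4) = (h1, h2, h3, h4)"
  proof (rule mat_eq)
    show "g1 < p" "g2 < p" "g3 < p" "g4 < p" "h1 < p" "h2 < p" "h3 < p" "h4 < p" using cg ch by auto
    show "int p dvd (int g1 - int h1)" using ce cf cg ch by algebra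
    show "int p dvd (int g2 - int h2)" using ce cf cg ch by algebra
    show "int p dvd (int g3 - int h3)" using ce cf cg ch by algebra
    show "int p dvd (int g4 - int h4)" using ce cf cg ch by algebra
  qed
  thus ?thesis using e f g h by simp
qed

lemma SL2_one: "(1, 0, 0, 1) \<in> SL2 p"
  using p_ge2 by (simp add: SL2_def)

lemma SL2_inv: "x \<in> SL2 p \<Longrightarrow> m2inv p x \<in> SL2 p \<and> m2mul p (m2inv p x) x = (1, 0, 0, 1)"
proof -
  assume x: "x \<in> SL2 p"
  obtain a b c d where xe: "x = (a, b, c, d)" by (cases x) auto
  have s: "a < p" "b < p" "c < p" "d < p" and det: "int p dvd (int a * int d - int b * int c - 1)"
    using SL2_D x xe by blast+
  define bb where "bb = (p - b) mod p"
  define cc where "cc = (p - c) mod p"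
  have ie: "m2inv p x = (d, bb, cc, a)" by (simp add: m2inv_def xe bb_def cc_def)
  have hb: "int p dvd (int bb - (int p - int b))" using mod_dvd[of "p - b"] s by (simp add: bb_def of_nat_diff)
  have hc: "int p dvd (int cc - (int p - int c))" using mod_dvd[of "p - c"] s by (simp add: cc_def of_nat_diff)
  have lt: "bb < p" "cc < p" using p_pos by (auto simp: bb_def cc_def)
  have "int p dvd (int d * int a - int bb * int cc - 1)" using hb hc det by algebra
  hence inS: "m2inv p x \<in> SL2 p" using SL2_I s lt ie by simp
  obtain e1 e2 e3 e4 where e: "m2mul p (d, bb, cc, a) (a, b, c, d) = (e1, e2, e3, e4)" by (cases "m2mul p (d, bb, cc, a) (a, b, c, d)") auto
  note ce = mm_cong[OF e]
  have "(e1, e2, e3, e4) = (1, 0, 0, 1)"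
  proof (rule mat_eq)
    show "e1 < p" "e2 < p" "e3 < p" "e4 < p" using ce by auto
    show "1 < p" "0 < p" "0 < p" "1 < p" using p_ge2 by auto
    show "int p dvd (int e1 - int 1)" using ce hb det by simp algebra
    show "int p dvd (int e2 - int 0)"
    proof -
      have eq: "int e2 - int 0 = (int e2 - (int d * int b + int bb * int d)) + int d * (int bb - (int p - int b)) + int p * int d"
        by (simp add: algebra_simps)
      show ?thesis unfolding eq by (intro dvd_add dvd_triv_left dvd_mult) (use ce(2) hb in auto)
    qed
    show "int p dvd (int e3 - int 0)"
    proof -
      have eq: "int e3 - int 0 = (int e3 - (int cc * int a + int a * int c)) + int a * (int cc - (int p - int c)) + int p * int a"
        by (simp add: algebra_simps)
      show ?thesis unfolding eq by (intro dvd_add dvd_triv_left dvd_mult) (use ce(3) hc in auto)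
    qed
    show "int p dvd (int e4 - int 1)" using ce hc det by simp algebra
  qed
  thus ?thesis using inS ie e xe by simp
qed

lemma SL2_group: "group (SL2_group p)"
proof (rule groupI)
  show "\<And>x y. x \<in> carrier (SL2_group p) \<Longrightarrow> y \<in> carrier (SL2_group p) \<Longrightarrow> x \<otimes>\<^bsub>SL2_group p\<^esub> y \<in> carrier (SL2_group p)"
    by (simp add: SL2_group_def SL2_closed)
  have o: "\<one>\<^bsub>SL2_group p\<^esub> = (1, 0, 0, 1)" "carrier (SL2_group p) = SL2 p" by (simp_all add: SL2_group_def)
  show "\<one>\<^bsub>SL2_group p\<^esub> \<in> carrier (SL2_group p)" unfolding o by (rule SL2_one)
  show "\<And>x y z. x \<in> carrier (SL2_group p) \<Longrightarrow> y \<in> carrier (SL2_group p) \<Longrightarrow> z \<in> carrier (SL2_group p) \<Longrightarrow>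
      x \<otimes>\<^bsub>SL2_group p\<^esub> y \<otimes>\<^bsub>SL2_group p\<^esub> z = x \<otimes>\<^bsub>SL2_group p\<^esub> (y \<otimes>\<^bsub>SL2_group p\<^esub> z)"
    by (simp add: SL2_group_def SL2_assoc)
  show "\<And>x. x \<in> carrier (SL2_group p) \<Longrightarrow> \<one>\<^bsub>SL2_group p\<^esub> \<otimes>\<^bsub>SL2_group p\<^esub> x = x"
  proof -
    fix x assume "x \<in> carrier (SL2_group p)"
    hence x: "x \<in> SL2 p" by (simp add: SL2_group_def)
    obtain a b c d where xe: "x = (a, b, c, d)" by (cases x) auto
    have "a < p" "b < p" "c < p" "d < p" using SL2_D x xe by blast+
    thus "\<one>\<^bsub>SL2_group p\<^esub> \<otimes>\<^bsub>SL2_group p\<^esub> x = x" by (simp add: SL2_group_def xe m2mul_def)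
  qed
  show "\<And>x. x \<in> carrier (SL2_group p) \<Longrightarrow> \<exists>y\<in>carrier (SL2_group p). y \<otimes>\<^bsub>SL2_group p\<^esub> x = \<one>\<^bsub>SL2_group p\<^esub>"
  proof -
    fix x assume "x \<in> carrier (SL2_group p)"
    hence x: "x \<in> SL2 p" using o by simp
    show "\<exists>y\<in>carrier (SL2_group p). y \<otimes>\<^bsub>SL2_group p\<^esub> x = \<one>\<^bsub>SL2_group p\<^esub>"
    proof (rule bexI[of _ "m2inv p x"])
      show "m2inv p x \<otimes>\<^bsub>SL2_group p\<^esub> x = \<one>\<^bsub>SL2_group p\<^esub>"
        using SL2_inv[OF x] o by (simp add: SL2_group_def)
      show "m2inv p x \<in> carrier (SL2_group p)" using SL2_inv[OF x] o by simp
    qed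
  qed
qed

lemma SL2_inv_eq: "x \<in> SL2 p \<Longrightarrow> inv\<^bsub>SL2_group p\<^esub> x = m2inv p x"
  using group.inv_equality[OF SL2_group] SL2_inv by (simp add: SL2_group_def)


lemma mub_val:
  assumes F1: "F1 \<in> SL2 p" and F2: "F2 \<in> SL2 p" and T: "\<not> int p dvd (Tr F1 F2 - 2)"
    and u: "u \<in> Zp2 p" and v: "v \<in> Zp2 p"
  shows "cmod (inner2 p (Jstate p F1 u) (Jstate p F2 v)) = 1 / real p"
proof -
  obtain a1 b1 c1 d1 where f1: "F1 = (a1, b1, c1, d1)" by (cases F1) auto
  obtain a2 b2 c2 d2 where f2: "F2 = (a2, b2, c2, d2)" by (cases F2) auto
  show ?thesis
  proof (cases "b1 = 0")
    case b1: True
    show ?thesis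
    proof (cases "b2 = 0")
      case True
      thus ?thesis using mub_zz[of a1 c1 d1 a2 c2 d2 u v] F1 F2 T u v f1 f2 b1 by simp
    next
      case False
      thus ?thesis using mub_zn[of a1 c1 d1 a2 b2 c2 d2 u v] F1 F2 T u v f1 f2 b1 by simp
    qed
  next
    case b1: False
    show ?thesis
    proof (cases "b2 = 0")
      case True
      have T': "\<not> int p dvd (Tr F2 F1 - 2)" using T Tr_sym by simp
      have "cmod (inner2 p (Jstate p F2 v) (Jstate p F1 u)) = 1 / real p"
        using mub_zn[of a2 c2 d2 a1 b1 c1 d1 v u] F1 F2 T' u v f1 f2 b1 True by simp
      thus ?thesis by (subst inner2_cnj) simp
    next
      case False
      thus ?thesis using mub_nn[of a1 b1 c1 d1 a2 b2 c2 d2 u v] F1 F2 T u v f1 f2 b1 by simp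
    qed
  qed
qed

lemma mub_F:
  assumes F1: "F1 \<in> SL2 p" and F2: "F2 \<in> SL2 p" and T: "\<not> int p dvd (Tr F1 F2 - 2)"
  shows "mub p (basisF p F1) (basisF p F2)"
  unfolding mub_def
proof (intro conjI ballI)
  show "is_onb p (basisF p F1)" "is_onb p (basisF p F2)" using onb F1 F2 by auto
  fix x y assume "x \<in> basisF p F1" "y \<in> basisF p F2"
  then obtain u v where uv: "u \<in> Zp2 p" "v \<in> Zp2 p" "x = Jstate p F1 u" "y = Jstate p F2 v"
    unfolding basisF_def by blast
  have "sqrt (real (p ^ 2)) = real p" by simp
  thus "cmod (inner2 p x y) = 1 / sqrt (real (p ^ 2))" using mub_val[OF F1 F2 T uv(1) uv(2)] uv by simp
qed

lemma finite_SL2: "finite (SL2 p)"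
proof -
  have "SL2 p \<subseteq> {..<p} \<times> {..<p} \<times> {..<p} \<times> {..<p}" by (auto simp: SL2_def)
  thus ?thesis by (rule finite_subset) simp
qed

lemma clique_bound:
  assumes K: "is_clique (SL2_group p) {F \<in> SL2 p. m2tr p F \<noteq> 2 mod p} K"
  shows "card K \<le> p ^ 2 - 1"
proof -
  have KS: "K \<subseteq> SL2 p" using K by (simp add: is_clique_def SL2_group_def)
  define col where "col = (\<lambda>F::mat2. case F of (a, b, c, d) \<Rightarrow> (a, c))"
  have adjT: "\<not> int p dvd (Tr F1 F2 - 2)" if F: "F1 \<in> K" "F2 \<in> K" "F1 \<noteq> F2" for F1 F2
  proof -
    have "cayley_adj (SL2_group p) {F \<in> SL2 p. m2tr p F \<noteq> 2 mod p} F1 F2" using K F by (simp add: is_clique_def)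
    moreover have ie: "inv\<^bsub>SL2_group p\<^esub> F1 = m2inv p F1" using SL2_inv_eq KS F by blast
    moreover have me: "x \<otimes>\<^bsub>SL2_group p\<^esub> y = m2mul p x y" for x y by (simp add: SL2_group_def)
    ultimately have "m2tr p (m2mul p (m2inv p F1) F2) \<noteq> 2 mod p"
      unfolding cayley_adj_def by (simp only: ie me) simp
    thus ?thesis using tr_cond KS F by blast
  qed
  have inj: "inj_on col K"
  proof (rule inj_onI, rule ccontr)
    fix F1 F2 assume F: "F1 \<in> K" "F2 \<in> K" "col F1 = col F2" "F1 \<noteq> F2"
    obtain a1 b1 c1 d1 where f1: "F1 = (a1, b1, c1, d1)" by (cases F1) auto
    obtain a2 b2 c2 d2 where f2: "F2 = (a2, b2, c2, d2)" by (cases F2) auto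
    have e: "a1 = a2" "c1 = c2" using F f1 f2 by (auto simp: col_def)
    have d1: "int p dvd (int a1 * int d1 - int b1 * int c1 - 1)" using SL2_D KS F f1 by blast
    have d2: "int p dvd (int a2 * int d2 - int b2 * int c2 - 1)" using SL2_D KS F f2 by blast
    have "Tr F1 F2 - 2 = (int a1 * int d1 - int b1 * int c1 - 1) + (int a2 * int d2 - int b2 * int c2 - 1)"
      using e unfolding f1 f2 Tr_def by (simp add: algebra_simps)
    hence "int p dvd (Tr F1 F2 - 2)" using dvd_add[OF d1 d2] by (simp only:)
    thus False using adjT F by blast
  qed
  have sub: "col ` K \<subseteq> Zp2 p - {(0, 0)}"
  proof
    fix z assume "z \<in> col ` K"
    then obtain F where F: "F \<in> K" "z = col F" by blast
    obtain a b c d where f: "F = (a, b, c, d)" by (cases F) auto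
    have s: "a < p" "c < p" and d: "int p dvd (int a * int d - int b * int c - 1)" using SL2_D KS F f by blast+
    have "(a, c) \<noteq> (0, 0)"
    proof
      assume "(a, c) = (0, 0)"
      hence "int p dvd 1" using d by simp
      thus False using p_ge2 by simp
    qed
    thus "z \<in> Zp2 p - {(0, 0)}" using F f s by (simp add: col_def Zp2_def)
  qed
  have "card K \<le> card (Zp2 p - {(0, 0)})"
    by (rule card_inj_on_le[OF inj sub]) (simp add: Zp2_def)
  also have "\<dots> = p ^ 2 - 1" using p_pos by (simp add: Zp2_def power2_eq_square)
  finally show ?thesis .
qed

end

theorem theorem1:
  fixes p :: nat
  assumes "prime p"
  shows "(\<forall>F\<in>SL2 p. is_onb p (basisF p F))
    \<and> (\<forall>F1\<in>SL2 p. \<forall>F2\<in>SL2 p. m2tr p (m2mul p (m2inv p F1) F2) \<noteq> 2 mod p \<longrightarrow>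
          mub p (basisF p F1) (basisF p F2) \<and>
          (\<forall>u\<in>Zp2 p. \<forall>v\<in>Zp2 p. cmod (inner2 p (Jstate p F1 u) (Jstate p F2 v)) = 1 / real p))
    \<and> (\<forall>\<F>. \<F> \<subseteq> SL2 p \<and> card \<F> = p ^ 2 - 1 \<and>
          (\<forall>F1\<in>\<F>. \<forall>F2\<in>\<F>. F1 \<noteq> F2 \<longrightarrow> m2tr p (m2mul p (m2inv p F1) F2) \<noteq> 2 mod p) \<longrightarrow>
          ent_stab_mub p (p ^ 2 - 1) (basisF p ` \<F>) \<and>
          is_max_clique (SL2_group p) {F \<in> SL2 p. m2tr p F \<noteq> 2 mod p} \<F>)"
proof (intro conjI ballI impI allI)
  note pr = assms
  show "is_onb p (basisF p F)" if "F \<in> SL2 p" for F using onb[OF pr that] .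
  fix F1 F2 assume F: "F1 \<in> SL2 p" "F2 \<in> SL2 p" and c: "m2tr p (m2mul p (m2inv p F1) F2) \<noteq> 2 mod p"
  have T: "\<not> int p dvd (Tr F1 F2 - 2)" using tr_cond[OF pr F c] .
  show "mub p (basisF p F1) (basisF p F2)" by (rule mub_F[OF pr F T])
  fix u v assume "u \<in> Zp2 p" "v \<in> Zp2 p"
  thus "cmod (inner2 p (Jstate p F1 u) (Jstate p F2 v)) = 1 / real p" by (rule mub_val[OF pr F T])
next
  note pr = assms
  fix \<F> assume H: "\<F> \<subseteq> SL2 p \<and> card \<F> = p ^ 2 - 1 \<and>
          (\<forall>F1\<in>\<F>. \<forall>F2\<in>\<F>. F1 \<noteq> F2 \<longrightarrow> m2tr p (m2mul p (m2inv p F1) F2) \<noteq> 2 mod p)"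
  hence sub: "\<F> \<subseteq> SL2 p" and cardF: "card \<F> = p ^ 2 - 1"
    and pw: "\<And>F1 F2. F1 \<in> \<F> \<Longrightarrow> F2 \<in> \<F> \<Longrightarrow> F1 \<noteq> F2 \<Longrightarrow> m2tr p (m2mul p (m2inv p F1) F2) \<noteq> 2 mod p"
    by auto
  have finF: "finite \<F>" using finite_subset[OF sub finite_SL2[OF pr]] .
  have p2: "p \<ge> 2" using p_ge2[OF pr] .
  have mubF: "mub p (basisF p F1) (basisF p F2)" if "F1 \<in> \<F>" "F2 \<in> \<F>" "F1 \<noteq> F2" for F1 F2
    using mub_F[OF pr _ _ tr_cond[OF pr _ _ pw[OF that]]] sub that by blast
  have inj: "inj_on (basisF p) \<F>"
  proof (rule inj_onI, rule ccontr)
    fix F1 F2 assume a: "F1 \<in> \<F>" "F2 \<in> \<F>" "basisF p F1 = basisF p F2" "F1 \<noteq> F2"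
    have z: "(0, 0) \<in> Zp2 p" using p2 by (simp add: Zp2_def)
    have x1: "Jstate p F1 (0, 0) \<in> basisF p F1" using z by (simp add: basisF_def)
    hence x2: "Jstate p F1 (0, 0) \<in> basisF p F2" using a by simp
    have "cmod (inner2 p (Jstate p F1 (0, 0)) (Jstate p F1 (0, 0))) = 1 / sqrt (real (p ^ 2))"
      using mubF[OF a(1) a(2) a(4)] x1 x2 unfolding mub_def by blast
    moreover have "inner2 p (Jstate p F1 (0, 0)) (Jstate p F1 (0, 0)) = 1" using R1[OF pr _ z z, of F1] sub a(1) by (simp add: subsetD)
    ultimately have "1 = 1 / real p" by simp
    thus False using p2 by (simp add: field_simps)
  qed
  show "ent_stab_mub p (p ^ 2 - 1) (basisF p ` \<F>)"
    unfolding ent_stab_mub_def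
  proof (intro conjI ballI impI)
    show "finite (basisF p ` \<F>)" using finF by simp
    show "card (basisF p ` \<F>) = p ^ 2 - 1" using card_image[OF inj] cardF by simp
  next
    fix B assume "B \<in> basisF p ` \<F>"
    then obtain F where F: "F \<in> \<F>" "B = basisF p F" by blast
    have FS: "F \<in> SL2 p" using F sub by blast
    show "is_onb p B" using onb[OF pr FS] F by simp
    fix \<psi> assume "\<psi> \<in> B"
    then obtain u where u: "u \<in> Zp2 p" "\<psi> = Jstate p F u" using F by (auto simp: basisF_def)
    show "max_ent p \<psi>" using maxent[OF pr FS u(1)] u by simp
    show "stab_state p \<psi>" using stab[OF pr FS u(1)] u by simp
  next
    fix B1 B2 assume B: "B1 \<in> basisF p ` \<F>" "B2 \<in> basisF p ` \<F>" "B1 \<noteq> B2"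
    then obtain F1 F2 where F: "F1 \<in> \<F>" "F2 \<in> \<F>" "B1 = basisF p F1" "B2 = basisF p F2" by blast
    hence "F1 \<noteq> F2" using B by blast
    thus "mub p B1 B2" using mubF F by simp
  qed
  show "is_max_clique (SL2_group p) {F \<in> SL2 p. m2tr p F \<noteq> 2 mod p} \<F>"
    unfolding is_max_clique_def
  proof (intro conjI allI impI)
    show "is_clique (SL2_group p) {F \<in> SL2 p. m2tr p F \<noteq> 2 mod p} \<F>"
      unfolding is_clique_def
    proof (intro conjI ballI impI)
      show "\<F> \<subseteq> carrier (SL2_group p)" using sub by (simp add: SL2_group_def)
      fix x y assume xy: "x \<in> \<F>" "y \<in> \<F>" "x \<noteq> y"
      have xs: "x \<in> SL2 p" "y \<in> SL2 p" using xy sub by auto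
      have ie: "inv\<^bsub>SL2_group p\<^esub> x = m2inv p x" using SL2_inv_eq[OF pr xs(1)] .
      have me: "a \<otimes>\<^bsub>SL2_group p\<^esub> b = m2mul p a b" for a b by (simp add: SL2_group_def)
      have cs: "carrier (SL2_group p) = SL2 p" by (simp add: SL2_group_def)
      have "m2mul p (m2inv p x) y \<in> SL2 p" using SL2_closed[OF pr _ xs(2)] SL2_inv[OF pr xs(1)] by blast
      thus "cayley_adj (SL2_group p) {F \<in> SL2 p. m2tr p F \<noteq> 2 mod p} x y"
        unfolding cayley_adj_def ie me cs using xs pw[OF xy] by simp
    qed
    fix K' assume "is_clique (SL2_group p) {F \<in> SL2 p. m2tr p F \<noteq> 2 mod p} K'"
    thus "card K' \<le> card \<F>" using clique_bound[OF pr] cardF by simp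
  qed
qed

end
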